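(* Let $\mathcal{A}$ be a blind $k$-counter automaton with $n\ge 1$ states. Then for every $u\in L(\mathcal{A})$ there is an ideal $I$ given by an ideal expression of length at most $(5n)^{7(k+1)^2}$ such that $u\in I\subseteq \downarrow L(\mathcal{A})$. Consequently, $\downarrow L(\mathcal{A})$ is a finite union of ideals each of which has an expression of length at most $(5n)^{7(k+1)^2}$.
   Context: A blind $k$-counter automaton is a tuple $\mathcal{A}=(Q,X,q_0,\Delta,Q_f)$ with $\Delta\subseteq Q\times(X\cup\{\varepsilon\})\times\{-1,0,1\}^k\times Q$ finite; a walk is a sequence of transitions whose consecutive states match, its effect is the sum of its vectors and its input the concatenation of its letters; it is accepting if it starts in $q_0$, ends in $Q_f$ and has effect $0$, and $L(\mathcal{A})$ is the set of inputs of accepting walks. $\downarrow L$ is the set of all (not necessarily contiguous) subwords of words in $L$. An ideal expression is a finite product of factors, each of the form $Y^*$ with $Y\subseteq X$ or $\{x,\varepsilon\}$ with $x\in X\cup\{\varepsilon\}$; its length is its number of factors, and the language it denotes is called an ideal. *)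

theory Defs
  imports Main "HOL-Library.Sublist"
begin

text \<open>A transition (p, a, v, q): source p, letter a (None = epsilon), counter update v
  (an int list of length k with entries in {-1,0,1}), target q.\<close>
type_synonym ('q, 'x) trans = "'q \<times> 'x option \<times> int list \<times> 'q"

definition src :: "('q, 'x) trans \<Rightarrow> 'q" where "src t = fst t"
definition lbl :: "('q, 'x) trans \<Rightarrow> 'x option" where "lbl t = fst (snd t)"
definition upd :: "('q, 'x) trans \<Rightarrow> int list" where "upd t = fst (snd (snd t))"
definition tgt :: "('q, 'x) trans \<Rightarrow> 'q" where "tgt t = snd (snd (snd t))"

definition blind_counter_automaton ::
  "nat \<Rightarrow> 'q set \<Rightarrow> 'x set \<Rightarrow> 'q \<Rightarrow> ('q, 'x) trans set \<Rightarrow> 'q set \<Rightarrow> bool" where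
  "blind_counter_automaton k Q X q0 \<Delta> Qf \<longleftrightarrow>
     finite Q \<and> finite X \<and> q0 \<in> Q \<and> Qf \<subseteq> Q \<and> finite \<Delta> \<and>
     (\<forall>t\<in>\<Delta>. src t \<in> Q \<and> tgt t \<in> Q \<and> set_option (lbl t) \<subseteq> X \<and>
        length (upd t) = k \<and> set (upd t) \<subseteq> {-1, 0, 1})"

definition is_walk :: "('q, 'x) trans set \<Rightarrow> ('q, 'x) trans list \<Rightarrow> bool" where
  "is_walk \<Delta> w \<longleftrightarrow> set w \<subseteq> \<Delta> \<and> (\<forall>i. Suc i < length w \<longrightarrow> tgt (w ! i) = src (w ! Suc i))"

definition effect :: "nat \<Rightarrow> ('q, 'x) trans list \<Rightarrow> int list" where
  "effect k w = map (\<lambda>i. \<Sum>t\<leftarrow>w. upd t ! i) [0..<k]"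

definition walk_input :: "('q, 'x) trans list \<Rightarrow> 'x list" where
  "walk_input w = concat (map (\<lambda>t. case lbl t of None \<Rightarrow> [] | Some a \<Rightarrow> [a]) w)"

definition accepting :: "nat \<Rightarrow> 'q \<Rightarrow> ('q, 'x) trans set \<Rightarrow> 'q set \<Rightarrow> ('q, 'x) trans list \<Rightarrow> bool" where
  "accepting k q0 \<Delta> Qf w \<longleftrightarrow> is_walk \<Delta> w \<and> effect k w = replicate k 0 \<and>
     (if w = [] then q0 \<in> Qf else src (hd w) = q0 \<and> tgt (last w) \<in> Qf)"

definition bca_lang :: "nat \<Rightarrow> 'q \<Rightarrow> ('q, 'x) trans set \<Rightarrow> 'q set \<Rightarrow> 'x list set" where
  "bca_lang k q0 \<Delta> Qf = {walk_input w | w. accepting k q0 \<Delta> Qf w}"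

definition down_closure :: "'x list set \<Rightarrow> 'x list set" where
  "down_closure L = {u. \<exists>v\<in>L. subseq u v}"

datatype 'x factor = Star "'x set" | Opt "'x option"

definition conc :: "'x list set \<Rightarrow> 'x list set \<Rightarrow> 'x list set" where
  "conc A B = {u @ v | u v. u \<in> A \<and> v \<in> B}"

fun factor_lang :: "'x factor \<Rightarrow> 'x list set" where
  "factor_lang (Star Y) = lists Y"
| "factor_lang (Opt None) = {[]}"
| "factor_lang (Opt (Some x)) = {[x], []}"

fun ideal_lang :: "'x factor list \<Rightarrow> 'x list set" where
  "ideal_lang [] = {[]}"
| "ideal_lang (f # fs) = conc (factor_lang f) (ideal_lang fs)"

fun factor_over :: "'x set \<Rightarrow> 'x factor \<Rightarrow> bool" where
  "factor_over X (Star Y) \<longleftrightarrow> Y \<subseteq> X"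
| "factor_over X (Opt a) \<longleftrightarrow> set_option a \<subseteq> X"

definition ideal_expr :: "'x set \<Rightarrow> 'x factor list \<Rightarrow> bool" where
  "ideal_expr X e \<longleftrightarrow> (\<forall>f\<in>set e. factor_over X f)"

end

theory Submission
  imports Defs Complex_Main "HOL-Library.Multiset" "HOL-Library.Function_Algebras"
begin


lemma lin_dep:
  fixes u :: "'i \<Rightarrow> nat \<Rightarrow> real"
  shows "finite S \<Longrightarrow> card S > N \<Longrightarrow> (\<forall>i\<in>S. \<forall>c\<ge>N. u i c = 0) \<Longrightarrow>
    \<exists>z. (\<exists>i\<in>S. z i \<noteq> 0) \<and> (\<forall>c. (\<Sum>i\<in>S. z i * u i c) = 0)"
proof (induction N arbitrary: S u)
  case 0
  then obtain i0 where i0: "i0 \<in> S" by fastforce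
  let ?z = "\<lambda>i. if i = i0 then 1 else (0::real)"
  have "(\<Sum>i\<in>S. ?z i * u i c) = 0" for c
  proof -
    have "(\<Sum>i\<in>S. ?z i * u i c) = (\<Sum>i\<in>S. if i = i0 then u i c else 0)"
      by (rule sum.cong) auto
    also have "\<dots> = u i0 c" using i0 0(1) by (simp add: sum.delta)
    also have "\<dots> = 0" using 0(3) i0 by auto
    finally show ?thesis .
  qed
  then show ?case using i0 by (intro exI[of _ ?z]) auto
next
  case (Suc N)
  show ?case
  proof (cases "\<forall>i\<in>S. u i N = 0")
    case True
    have "\<forall>i\<in>S. \<forall>c\<ge>N. u i c = 0"
      using True Suc.prems(3) by (metis Suc_leI le_eq_less_or_eq)
    then show ?thesis using Suc.IH[of S u] Suc.prems by auto
  next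
    case False
    then obtain i0 where i0: "i0 \<in> S" "u i0 N \<noteq> 0" by auto
    define S' where "S' = S - {i0}"
    define u' where "u' = (\<lambda>i c. u i c - (u i N / u i0 N) * u i0 c)"
    have fS': "finite S'" using Suc.prems(1) S'_def by auto
    have cS': "card S' > N" using Suc.prems(1,2) i0 S'_def by auto
    have "\<forall>i\<in>S'. \<forall>c\<ge>N. u' i c = 0"
    proof (intro ballI allI impI)
      fix i c assume i: "i \<in> S'" and c: "N \<le> c"
      show "u' i c = 0"
      proof (cases "c = N")
        case True then show ?thesis using i0 by (simp add: u'_def)
      next
        case False
        then have "Suc N \<le> c" using c by auto
        then have "u i c = 0" "u i0 c = 0" using Suc.prems(3) i i0 S'_def by auto
        then show ?thesis by (simp add: u'_def)
      qed
    qed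
    from Suc.IH[OF fS' cS' this] obtain z' where
      z': "\<exists>i\<in>S'. z' i \<noteq> 0" "\<forall>c. (\<Sum>i\<in>S'. z' i * u' i c) = 0" by blast
    define z where "z = (\<lambda>i. if i = i0 then - (\<Sum>j\<in>S'. z' j * (u j N / u i0 N)) else z' i)"
    have S: "S = insert i0 S'" "i0 \<notin> S'" using i0 S'_def by auto
    have "(\<Sum>i\<in>S. z i * u i c) = 0" for c
    proof -
      have "(\<Sum>i\<in>S. z i * u i c) = z i0 * u i0 c + (\<Sum>i\<in>S'. z i * u i c)"
        using S fS' by simp
      also have "(\<Sum>i\<in>S'. z i * u i c) = (\<Sum>i\<in>S'. z' i * u i c)"
        using S by (intro sum.cong) (auto simp: z_def)
      also have "z i0 * u i0 c = - (\<Sum>j\<in>S'. z' j * (u j N / u i0 N) * u i0 c)"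
        by (simp add: z_def sum_distrib_right)
      finally have "(\<Sum>i\<in>S. z i * u i c) =
          (\<Sum>i\<in>S'. z' i * u i c) - (\<Sum>j\<in>S'. z' j * (u j N / u i0 N) * u i0 c)" by simp
      also have "\<dots> = (\<Sum>i\<in>S'. z' i * u' i c)"
        by (simp add: u'_def sum_subtractf[symmetric] algebra_simps)
      finally show ?thesis using z'(2) by simp
    qed
    moreover have "\<exists>i\<in>S. z i \<noteq> 0" using z'(1) S by (auto simp: z_def)
    ultimately show ?thesis by blast
  qed
qed


definition feas :: "(nat \<Rightarrow> nat \<Rightarrow> real) \<Rightarrow> nat set \<Rightarrow> real \<Rightarrow> (nat \<Rightarrow> real) \<Rightarrow> bool" where
  "feas v A r l \<longleftrightarrow> (\<forall>i\<in>A. 0 \<le> l i \<and> l i \<le> 1) \<and> (\<Sum>i\<in>A. l i) = r \<and>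
     (\<forall>c. (\<Sum>i\<in>A. l i * v i c) = 0)"

definition frac :: "nat set \<Rightarrow> (nat \<Rightarrow> real) \<Rightarrow> nat set" where
  "frac A l = {i\<in>A. 0 < l i \<and> l i < 1}"

lemma vertex_step:
  assumes fin: "finite A" and vk: "\<forall>i\<in>A. \<forall>c\<ge>k. v i c = 0"
    and f: "feas v A r l" and big: "card (frac A l) > k + 1"
  shows "\<exists>m. feas v A r m \<and> card (frac A m) < card (frac A l)"
proof -
  define Fr where "Fr = frac A l"
  have FrA: "Fr \<subseteq> A" by (auto simp: Fr_def frac_def)
  have fFr: "finite Fr" using FrA fin finite_subset by auto
  define u where "u = (\<lambda>i c. if c = k then 1 else v i c)"
  have "\<forall>i\<in>Fr. \<forall>c\<ge>k+1. u i c = 0" using vk FrA by (auto simp: u_def)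
  from lin_dep[OF fFr _ this] big obtain z where
    z: "\<exists>i\<in>Fr. z i \<noteq> 0" "\<forall>c. (\<Sum>i\<in>Fr. z i * u i c) = 0" by (auto simp: Fr_def)
  have zsum: "(\<Sum>i\<in>Fr. z i) = 0" using z(2)[rule_format, of k] by (simp add: u_def)
  have zv: "(\<Sum>i\<in>Fr. z i * v i c) = 0" for c
  proof (cases "c = k")
    case True
    have "(\<Sum>i\<in>Fr. z i * v i c) = (\<Sum>i\<in>Fr. 0)" using vk FrA True by (intro sum.cong) auto
    then show ?thesis by simp
  next
    case False then show ?thesis using z(2)[rule_format, of c] by (simp add: u_def)
  qed
  define P where "P = {i\<in>Fr. z i > 0}"
  define Ng where "Ng = {i\<in>Fr. z i < 0}"
  define R where "R = (\<lambda>i. (1 - l i) / z i) ` P \<union> (\<lambda>i. l i / (- z i)) ` Ng"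
  have fR: "finite R" using fFr by (auto simp: R_def P_def Ng_def)
  have neR: "R \<noteq> {}" using z(1) by (auto simp: R_def P_def Ng_def neq_iff)
  have lfr: "\<And>i. i \<in> Fr \<Longrightarrow> 0 < l i \<and> l i < 1" by (auto simp: Fr_def frac_def)
  have Rpos: "\<forall>x\<in>R. x > 0" using lfr by (auto simp: R_def P_def Ng_def divide_pos_neg)
  define t where "t = Min R"
  have tR: "t \<in> R" using fR neR by (simp add: t_def)
  have tpos: "t > 0" using tR Rpos by auto
  have tle: "\<And>x. x \<in> R \<Longrightarrow> t \<le> x" using fR by (simp add: t_def)
  define m where "m = (\<lambda>i. if i \<in> Fr then l i + t * z i else l i)"
  have bnd: "0 \<le> m i \<and> m i \<le> 1" if "i \<in> A" for i
  proof (cases "i \<in> Fr")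
    case False then show ?thesis using f that by (simp add: m_def feas_def)
  next
    case True
    note li = lfr[OF True]
    consider "z i > 0" | "z i < 0" | "z i = 0" by linarith
    then show ?thesis
    proof cases
      case 1
      then have "t \<le> (1 - l i) / z i" using True by (intro tle) (auto simp: R_def P_def)
      then have "t * z i \<le> 1 - l i" using 1 by (simp add: pos_le_divide_eq)
      moreover have "0 \<le> t * z i" using 1 tpos by simp
      ultimately show ?thesis using li True by (simp add: m_def)
    next
      case 2
      then have "t \<le> l i / (- z i)" using True by (intro tle) (auto simp: R_def Ng_def)
      moreover have "- z i > 0" using 2 by simp
      ultimately have "t * (- z i) \<le> l i" using pos_le_divide_eq by blast
      moreover have "t * z i \<le> 0" using 2 tpos by (meson less_imp_le mult_pos_neg)
      ultimately show ?thesis using li True by (simp add: m_def)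
    next
      case 3 then show ?thesis using li True by (simp add: m_def)
    qed
  qed
  have split: "(\<Sum>i\<in>A. m i * g i) = (\<Sum>i\<in>A. l i * g i) + t * (\<Sum>i\<in>Fr. z i * g i)" for g
  proof -
    have "(\<Sum>i\<in>A. m i * g i) = (\<Sum>i\<in>A. l i * g i + (if i \<in> Fr then t * z i * g i else 0))"
      by (intro sum.cong) (auto simp: m_def algebra_simps)
    also have "\<dots> = (\<Sum>i\<in>A. l i * g i) + (\<Sum>i\<in>A. if i \<in> Fr then t * z i * g i else 0)"
      by (simp add: sum.distrib)
    also have "(\<Sum>i\<in>A. if i \<in> Fr then t * z i * g i else 0) = (\<Sum>i\<in>Fr. t * z i * g i)"
      using fin FrA by (simp add: sum.If_cases Int_absorb1)
    also have "\<dots> = t * (\<Sum>i\<in>Fr. z i * g i)" by (simp add: sum_distrib_left mult.assoc)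
    finally show ?thesis .
  qed
  have fm: "feas v A r m"
    unfolding feas_def
  proof (intro conjI ballI allI)
    show "\<And>i. i \<in> A \<Longrightarrow> 0 \<le> m i" "\<And>i. i \<in> A \<Longrightarrow> m i \<le> 1" using bnd by auto
    show "(\<Sum>i\<in>A. m i) = r" using split[of "\<lambda>_. 1"] zsum f by (simp add: feas_def)
    show "(\<Sum>i\<in>A. m i * v i c) = 0" for c using split[of "\<lambda>i. v i c"] zv f by (simp add: feas_def)
  qed
  have sub: "frac A m \<subseteq> Fr" by (auto simp: frac_def Fr_def m_def)
  obtain i where i: "i \<in> Fr" "m i = 0 \<or> m i = 1"
  proof -
    from tR consider (a) i where "i \<in> P" "t = (1 - l i) / z i" | (b) i where "i \<in> Ng" "t = l i / (- z i)"
      by (auto simp: R_def)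
    then show ?thesis
    proof cases
      case a
      then have "t * z i = 1 - l i" by (auto simp: P_def)
      then show ?thesis using that a by (auto simp: m_def P_def)
    next
      case b
      moreover have "- z i > 0" using b by (auto simp: Ng_def)
      ultimately have "t * (- z i) = l i" by simp
      then show ?thesis using that b by (auto simp: m_def Ng_def)
    qed
  qed
  have "i \<notin> frac A m" using i by (auto simp: frac_def)
  then have "frac A m \<subset> Fr" using sub i by auto
  then have "card (frac A m) < card Fr" using fFr by (simp add: psubset_card_mono)
  then show ?thesis using fm by (auto simp: Fr_def)
qed

lemma vertex:
  assumes fin: "finite A" and vk: "\<forall>i\<in>A. \<forall>c\<ge>k. v i c = 0" and f: "feas v A r l"
  shows "\<exists>m. feas v A r m \<and> card (frac A m) \<le> k + 1"
  using f
proof (induction "card (frac A l)" arbitrary: l rule: less_induct)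
  case less
  show ?case
  proof (cases "card (frac A l) \<le> k + 1")
    case True then show ?thesis using less.prems by blast
  next
    case False
    from vertex_step[OF fin vk less.prems] False obtain m where
      "feas v A r m" "card (frac A m) < card (frac A l)" by auto
    then show ?thesis using less.hyps by blast
  qed
qed


lemma sum_list_abs_bound:
  fixes f :: "'a \<Rightarrow> real"
  assumes "\<forall>y\<in>set ys. \<bar>f y\<bar> \<le> D"
  shows "\<bar>(\<Sum>y\<leftarrow>ys. f y)\<bar> \<le> real (length ys) * D"
  using assms
proof (induction ys)
  case Nil then show ?case by simp
next
  case (Cons a ys)
  have "\<bar>(\<Sum>y\<leftarrow>a#ys. f y)\<bar> \<le> \<bar>f a\<bar> + \<bar>(\<Sum>y\<leftarrow>ys. f y)\<bar>" by (simp add: abs_triangle_ineq)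
  also have "\<dots> \<le> D + real (length ys) * D" using Cons by (intro add_mono) auto
  finally show ?case by (simp add: algebra_simps)
qed

lemma order_step:
  fixes v :: "nat \<Rightarrow> nat \<Rightarrow> real" and D :: real
  assumes vk: "\<forall>i\<in>A. \<forall>c\<ge>k. v i c = 0" and vD: "\<forall>i\<in>A. \<forall>c. \<bar>v i c\<bar> \<le> D" and D0: "0 \<le> D"
  shows "finite A \<Longrightarrow> card A = j \<Longrightarrow> k \<le> j \<Longrightarrow> feas v A (real j - real k) l \<Longrightarrow>
    \<exists>xs. distinct xs \<and> set xs = A \<and> (\<forall>L\<le>j. \<forall>c. \<bar>(\<Sum>i\<leftarrow>take L xs. v i c)\<bar> \<le> real k * D)"
  using vk vD
proof (induction j arbitrary: A l)
  case 0
  then show ?case by (intro exI[of _ "[]"]) auto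
next
  case (Suc j)
  show ?case
  proof (cases "Suc j = k")
    case True
    define xs where "xs = sorted_list_of_set A"
    have xs: "distinct xs" "set xs = A" using Suc.prems(1) by (auto simp: xs_def)
    have "\<bar>(\<Sum>i\<leftarrow>take L xs. v i c)\<bar> \<le> real k * D" if "L \<le> Suc j" for L c
    proof -
      have "\<forall>y\<in>set (take L xs). \<bar>v y c\<bar> \<le> D" using Suc.prems(6) xs by (auto dest: in_set_takeD)
      then have "\<bar>(\<Sum>i\<leftarrow>take L xs. v i c)\<bar> \<le> real (length (take L xs)) * D"
        by (rule sum_list_abs_bound)
      also have "\<dots> \<le> real k * D" using that True D0 by (intro mult_right_mono) auto
      finally show ?thesis .
    qed
    then show ?thesis using xs by blast
  next
    case False
    then have jk: "k \<le> j" using Suc.prems(3) by auto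
    have fin: "finite A" using Suc.prems(1) .
    note fl = Suc.prems(4)[unfolded feas_def]
    define q where "q = (real j - real k) / (real (Suc j) - real k)"
    have q: "0 \<le> q" "q \<le> 1" using jk by (auto simp: q_def)
    define l0 where "l0 = (\<lambda>i. l i * q)"
    have "feas v A (real j - real k) l0"
      unfolding feas_def
    proof (intro conjI ballI allI)
      fix i assume "i \<in> A"
      then have "0 \<le> l i" "l i \<le> 1" using fl by auto
      then show "0 \<le> l0 i" "l0 i \<le> 1" using q by (auto simp: l0_def mult_le_one)
    next
      have "(\<Sum>i\<in>A. l0 i) = (\<Sum>i\<in>A. l i) * q" by (simp add: l0_def sum_distrib_right)
      also have "\<dots> = real j - real k" using fl jk by (simp add: q_def)
      finally show "(\<Sum>i\<in>A. l0 i) = real j - real k" .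
    next
      fix c
      have "(\<Sum>i\<in>A. l0 i * v i c) = q * (\<Sum>i\<in>A. l i * v i c)"
        by (simp add: l0_def sum_distrib_left algebra_simps)
      then show "(\<Sum>i\<in>A. l0 i * v i c) = 0" using fl by simp
    qed
    from vertex[OF fin Suc.prems(5) this] obtain m where
      m: "feas v A (real j - real k) m" "card (frac A m) \<le> k + 1" by blast
    note fm = m(1)[unfolded feas_def]
    have "\<exists>i0\<in>A. m i0 = 0"
    proof (rule ccontr)
      assume "\<not> ?thesis"
      then have pos: "\<forall>i\<in>A. 0 < m i" using fm by force
      define Fr where "Fr = frac A m"
      define On where "On = {i\<in>A. m i = 1}"
      have AU: "A = Fr \<union> On" "Fr \<inter> On = {}" using pos fm by (auto simp: Fr_def On_def frac_def)
      have fF: "finite Fr" "finite On" using fin AU by (metis finite_Un)+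
      have cA: "card Fr + card On = Suc j" using AU fF Suc.prems(2) card_Un_disjoint by metis
      have "(\<Sum>i\<in>A. m i) = (\<Sum>i\<in>Fr. m i) + (\<Sum>i\<in>On. m i)"
        using AU fF by (simp add: sum.union_disjoint)
      also have "(\<Sum>i\<in>On. m i) = real (card On)" by (simp add: On_def)
      finally have eq: "real j - real k = (\<Sum>i\<in>Fr. m i) + real (card On)" using fm by simp
      show False
      proof (cases "Fr = {}")
        case True
        then show ?thesis using eq cA by simp
      next
        case False
        have "(\<Sum>i\<in>Fr. m i) > 0" using False fF pos AU by (intro sum_pos) auto
        moreover have "card On \<ge> j - k" using cA m(2) by (simp add: Fr_def)
        ultimately show ?thesis using eq jk by linarith
      qed
    qed
    then obtain i0 where i0: "i0 \<in> A" "m i0 = 0" by blast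
    define A' where "A' = A - {i0}"
    have A': "finite A'" "card A' = j" using fin Suc.prems(2) i0 by (auto simp: A'_def)
    have Ai: "A = insert i0 A'" "i0 \<notin> A'" using i0 by (auto simp: A'_def)
    have "feas v A' (real j - real k) m"
      unfolding feas_def
    proof (intro conjI ballI allI)
      show "0 \<le> m i" "m i \<le> 1" if "i \<in> A'" for i using that fm Ai by auto
      have "(\<Sum>i\<in>A. m i) = m i0 + (\<Sum>i\<in>A'. m i)" using Ai A'(1) by simp
      then show "(\<Sum>i\<in>A'. m i) = real j - real k" using fm i0 by simp
      fix c
      have "(\<Sum>i\<in>A. m i * v i c) = m i0 * v i0 c + (\<Sum>i\<in>A'. m i * v i c)" using Ai A'(1) by simp
      then show "(\<Sum>i\<in>A'. m i * v i c) = 0" using fm i0 by simp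
    qed
    from Suc.IH[OF A' jk this] Suc.prems(5,6) obtain xs' where
      xs': "distinct xs'" "set xs' = A'" "\<forall>L\<le>j. \<forall>c. \<bar>(\<Sum>i\<leftarrow>take L xs'. v i c)\<bar> \<le> real k * D"
      by (auto simp: A'_def)
    have lenxs': "length xs' = j" using xs' A' distinct_card by fastforce
    define xs where "xs = xs' @ [i0]"
    have xs: "distinct xs" "set xs = A" using xs' Ai by (auto simp: xs_def)
    have "\<bar>(\<Sum>i\<leftarrow>take L xs. v i c)\<bar> \<le> real k * D" if L: "L \<le> Suc j" for L c
    proof (cases "L \<le> j")
      case True
      then have "take L xs = take L xs'" using lenxs' by (simp add: xs_def)
      then show ?thesis using xs' True by simp
    next
      case False
      then have "take L xs = xs" using L lenxs' by (simp add: xs_def)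
      then have "(\<Sum>i\<leftarrow>take L xs. v i c) = (\<Sum>i\<in>A. v i c)"
        using xs by (simp add: sum_list_distinct_conv_sum_set)
      also have "\<dots> = (\<Sum>i\<in>A. v i c) - (\<Sum>i\<in>A. l i * v i c)" using fl by simp
      also have "\<dots> = (\<Sum>i\<in>A. (1 - l i) * v i c)" by (simp add: sum_subtractf[symmetric] algebra_simps)
      finally have "\<bar>(\<Sum>i\<leftarrow>take L xs. v i c)\<bar> \<le> (\<Sum>i\<in>A. \<bar>(1 - l i) * v i c\<bar>)"
        using sum_abs by (metis)
      also have "\<dots> \<le> (\<Sum>i\<in>A. (1 - l i) * D)"
        using fl Suc.prems(6) by (intro sum_mono) (auto simp: abs_mult intro: mult_left_mono)
      also have "\<dots> = (real (Suc j) - (real (Suc j) - real k)) * D"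
        using fl Suc.prems(2) by (simp add: sum_distrib_right[symmetric] sum_subtractf)
      also have "\<dots> = real k * D" by simp
      finally show ?thesis .
    qed
    then show ?thesis using xs by blast
  qed
qed

lemma steinitz:
  fixes v :: "nat \<Rightarrow> nat \<Rightarrow> real" and D :: real
  assumes vk: "\<forall>i<m. \<forall>c\<ge>k. v i c = 0" and vD: "\<forall>i<m. \<forall>c. \<bar>v i c\<bar> \<le> D" and D0: "0 \<le> D"
    and s0: "\<forall>c. (\<Sum>i<m. v i c) = 0"
  shows "\<exists>xs. distinct xs \<and> set xs = {..<m} \<and> (\<forall>L\<le>m. \<forall>c. \<bar>(\<Sum>i\<leftarrow>take L xs. v i c)\<bar> \<le> real k * D)"
proof (cases "m < k")
  case True
  define xs where "xs = [0..<m]"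
  have xs: "distinct xs" "set xs = {..<m}" by (auto simp: xs_def)
  have "\<bar>(\<Sum>i\<leftarrow>take L xs. v i c)\<bar> \<le> real k * D" if "L \<le> m" for L c
  proof -
    have "\<forall>y\<in>set (take L xs). \<bar>v y c\<bar> \<le> D" using vD xs by (auto dest: in_set_takeD)
    then have "\<bar>(\<Sum>i\<leftarrow>take L xs. v i c)\<bar> \<le> real (length (take L xs)) * D"
      by (rule sum_list_abs_bound)
    also have "\<dots> \<le> real k * D" using that True D0 by (intro mult_right_mono) (auto simp: xs_def)
    finally show ?thesis .
  qed
  then show ?thesis using xs by blast
next
  case False
  define l where "l = (\<lambda>i::nat. (real m - real k) / real m)"
  have "feas v {..<m} (real m - real k) l"
    unfolding feas_def
  proof (intro conjI ballI allI)
    show "0 \<le> l i" "l i \<le> 1" for i using False by (auto simp: l_def divide_le_eq_1)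
    show "(\<Sum>i<m. l i) = real m - real k" using False by (cases "m = 0") (auto simp: l_def)
    show "(\<Sum>i<m. l i * v i c) = 0" for c
    proof -
      have "(\<Sum>i<m. l i * v i c) = (real m - real k) / real m * (\<Sum>i<m. v i c)"
        by (simp add: l_def sum_distrib_left)
      then show ?thesis using s0 by simp
    qed
  qed
  from order_step[of "{..<m}" k v D m l] this vk vD D0 False show ?thesis by auto
qed



lemma zsf_bound:
  fixes w :: "nat \<Rightarrow> nat \<Rightarrow> int" and k D :: nat
  assumes wk: "\<forall>i<m. \<forall>c\<ge>k. w i c = 0"
    and wD: "\<forall>i<m. \<forall>c. \<bar>w i c\<bar> \<le> int D"
    and sD: "\<forall>c. \<bar>\<Sum>i<m. w i c\<bar> \<le> int D"
    and zsf: "\<forall>I \<subseteq> {..<m}. I \<noteq> {} \<longrightarrow> (\<exists>c. (\<Sum>i\<in>I. w i c) \<noteq> 0)"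
  shows "Suc m \<le> (2 * k * D + 1) ^ k"
proof -
  define s where "s = (\<lambda>c. \<Sum>i<m. w i c)"
  define w' where "w' = (\<lambda>i c. if i < m then w i c else - s c)"
  define v where "v = (\<lambda>i c. real_of_int (w' i c))"
  have wJ: "(\<Sum>i\<in>J. w' i c) = (\<Sum>i\<in>J. w i c)" if "J \<subseteq> {..<m}" for J c
    using that by (intro sum.cong) (auto simp: w'_def)
  have sk: "\<forall>c\<ge>k. s c = 0" using wk by (simp add: s_def)
  have tot: "(\<Sum>i<Suc m. w' i c) = 0" for c by (simp add: w'_def s_def)
  have "\<exists>xs. distinct xs \<and> set xs = {..<Suc m} \<and>
      (\<forall>L\<le>Suc m. \<forall>c. \<bar>(\<Sum>i\<leftarrow>take L xs. v i c)\<bar> \<le> real k * real D)"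
  proof (rule steinitz)
    show "\<forall>i<Suc m. \<forall>c\<ge>k. v i c = 0" using wk sk by (auto simp: v_def w'_def)
    show "\<forall>i<Suc m. \<forall>c. \<bar>v i c\<bar> \<le> real D"
    proof (intro allI impI)
      fix i c assume "i < Suc m"
      have "\<bar>w' i c\<bar> \<le> int D" using wD sD by (auto simp: w'_def s_def)
      then show "\<bar>v i c\<bar> \<le> real D" by (simp add: v_def)
    qed
    show "0 \<le> real D" by simp
    show "\<forall>c. (\<Sum>i<Suc m. v i c) = 0"
      using tot by (simp add: v_def of_int_sum[symmetric])
  qed
  then obtain xs where xs: "distinct xs" "set xs = {..<Suc m}"
    and bd: "\<forall>L\<le>Suc m. \<forall>c. \<bar>(\<Sum>i\<leftarrow>take L xs. v i c)\<bar> \<le> real k * real D" by blast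
  have lxs: "length xs = Suc m" using xs distinct_card by fastforce
  define P where "P = (\<lambda>L c. \<Sum>i\<in>set (take L xs). w' i c)"
  have Pbd: "\<bar>P L c\<bar> \<le> int (k * D)" if "L \<le> Suc m" for L c
  proof -
    have "(\<Sum>i\<leftarrow>take L xs. v i c) = real_of_int (P L c)"
      using xs by (simp add: sum_list_distinct_conv_sum_set P_def v_def of_int_sum)
    moreover have "\<bar>(\<Sum>i\<leftarrow>take L xs. v i c)\<bar> \<le> real k * real D" using bd that by blast
    ultimately have "\<bar>real_of_int (P L c)\<bar> \<le> real (k * D)" by simp
    then show ?thesis by linarith
  qed
  have Pk: "P L c = 0" if "c \<ge> k" for L c
    using wk sk that xs by (auto simp: P_def w'_def intro!: sum.neutral dest: in_set_takeD)
  define B where "B = {ys. set ys \<subseteq> {- int (k * D)..int (k * D)} \<and> length ys = k}"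
  define f where "f = (\<lambda>L. map (P L) [0..<k])"
  have inj: "inj_on f {..m}"
  proof (rule inj_onI, rule ccontr)
    fix L1 L2 assume L: "L1 \<in> {..m}" "L2 \<in> {..m}" "f L1 = f L2" "L1 \<noteq> L2"
    have Peq: "P L1 = P L2"
    proof
      fix c show "P L1 c = P L2 c"
      proof (cases "c < k")
        case True
        have "\<forall>x\<in>{0..<k}. P L1 x = P L2 x" using L(3) unfolding f_def by simp
        then show ?thesis using True by simp
      qed (simp add: Pk)
    qed
    obtain a b where ab: "a < b" "b \<le> m" "P a = P b"
    proof (cases "L1 < L2")
      case True then show ?thesis using that L Peq by auto
    next
      case False then have "L2 < L1" using L(4) by simp
      then show ?thesis using that L Peq by auto
    qed
    define I where "I = set (drop a (take b xs))"
    have tb: "take b xs = take a xs @ drop a (take b xs)"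
    proof -
      have "take a (take b xs) = take a xs" using ab by (simp add: min_def)
      then show ?thesis by (metis append_take_drop_id)
    qed
    have "distinct (take b xs)" using xs(1) by simp
    then have dj: "set (take a xs) \<inter> I = {}" unfolding I_def using tb
      by (metis distinct_append)
    have Isum: "(\<Sum>i\<in>I. w' i c) = 0" for c
    proof -
      have "P b c = P a c + (\<Sum>i\<in>I. w' i c)"
        unfolding P_def I_def by (subst tb) (simp add: sum.union_disjoint dj[unfolded I_def])
      then show ?thesis using ab by simp
    qed
    have Ine: "I \<noteq> {}" using ab lxs by (simp add: I_def)
    have cI: "card I = b - a"
    proof -
      have "distinct (drop a (take b xs))" using xs(1) by simp
      then have "card I = length (drop a (take b xs))" unfolding I_def by (rule distinct_card)
      then show ?thesis using lxs ab by simp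
    qed
    have IU: "I \<subseteq> {..<Suc m}" using xs by (auto simp: I_def dest: in_set_dropD in_set_takeD)
    show False
    proof (cases "m \<in> I")
      case False
      have "I \<subseteq> {..<m}"
      proof
        fix x assume "x \<in> I"
        then have "x < Suc m" "x \<noteq> m" using IU False by auto
        then show "x \<in> {..<m}" by simp
      qed
      then have "I \<subseteq> {..<m}" .
      moreover have "(\<Sum>i\<in>I. w i c) = 0" for c
        using Isum[of c] wJ[OF \<open>I \<subseteq> {..<m}\<close>] by simp
      ultimately show False using zsf Ine by blast
    next
      case True
      define J where "J = {..<Suc m} - I"
      have "J \<subseteq> {..<m}" using True by (auto simp: J_def less_Suc_eq)
      moreover have "J \<noteq> {}"
      proof
        assume "J = {}"
        then have "I = {..<Suc m}" using IU by (auto simp: J_def)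
        then show False using cI ab by simp
      qed
      moreover have "(\<Sum>i\<in>J. w i c) = 0" for c
      proof -
        have "(\<Sum>i\<in>J. w' i c) = (\<Sum>i<Suc m. w' i c) - (\<Sum>i\<in>I. w' i c)"
          unfolding J_def using IU by (simp add: sum_diff)
        then have "(\<Sum>i\<in>J. w' i c) = 0" using tot Isum by simp
        then show ?thesis using wJ[OF \<open>J \<subseteq> {..<m}\<close>] by simp
      qed
      ultimately show False using zsf by blast
    qed
  qed
  have "f ` {..m} \<subseteq> B"
  proof
    fix y assume "y \<in> f ` {..m}"
    then obtain L where L: "L \<le> m" "y = f L" by auto
    have a: "\<bar>P L c\<bar> \<le> int (k * D)" for c using Pbd L by simp
    have "P L c \<in> {- int (k * D)..int (k * D)}" for c
      using a[of c] unfolding atLeastAtMost_iff abs_le_iff by linarith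
    then show "y \<in> B" using L by (auto simp: f_def B_def)
  qed
  moreover have "finite B" unfolding B_def by (intro finite_lists_length_eq) auto
  ultimately have "card {..m} \<le> card B" using inj card_inj_on_le by blast
  also have "card B = (2 * k * D + 1) ^ k"
    unfolding B_def by (subst card_lists_length_eq) (auto simp: nat_add_distrib nat_mult_distrib mult.commute mult.left_commute)
  finally show ?thesis by simp
qed


fun path :: "('q, 'x) trans set \<Rightarrow> 'q \<Rightarrow> ('q, 'x) trans list \<Rightarrow> 'q \<Rightarrow> bool" where
  "path D p [] q \<longleftrightarrow> p = q"
| "path D p (t # ws) q \<longleftrightarrow> t \<in> D \<and> src t = p \<and> path D (tgt t) ws q"

lemma path_append: "path D p (a @ b) q \<longleftrightarrow> (\<exists>r. path D p a r \<and> path D r b q)"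
  by (induction a arbitrary: p) auto

lemma path_det: "path D p ws q \<Longrightarrow> path D p ws q' \<Longrightarrow> q = q'"
  by (induction ws arbitrary: p) auto

lemma path_set: "path D p ws q \<Longrightarrow> set ws \<subseteq> D"
  by (induction ws arbitrary: p) auto

lemma path_hd: "path D p ws q \<Longrightarrow> ws \<noteq> [] \<Longrightarrow> src (hd ws) = p"
  by (cases ws) auto

lemma path_last: "path D p ws q \<Longrightarrow> ws \<noteq> [] \<Longrightarrow> tgt (last ws) = q"
  by (induction ws arbitrary: p) (auto split: if_splits)

lemma path_mono: "path D p ws q \<Longrightarrow> D \<subseteq> D' \<Longrightarrow> path D' p ws q"
  by (induction ws arbitrary: p) auto

lemma path_Q: "path D p ws q \<Longrightarrow> p \<in> Q \<Longrightarrow> \<forall>t\<in>D. tgt t \<in> Q \<Longrightarrow> q \<in> Q"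
  by (induction ws arbitrary: p) auto

lemma is_walk_Cons: "is_walk D (t # ws) \<longleftrightarrow> t \<in> D \<and> is_walk D ws \<and> (ws \<noteq> [] \<longrightarrow> tgt t = src (hd ws))"
proof
  assume a: "is_walk D (t # ws)"
  then have "t \<in> D" "set ws \<subseteq> D" by (auto simp: is_walk_def)
  moreover have "\<forall>i. Suc i < length ws \<longrightarrow> tgt (ws ! i) = src (ws ! Suc i)"
    using a unfolding is_walk_def by (metis Suc_less_eq length_Cons nth_Cons_Suc)
  moreover have "ws \<noteq> [] \<longrightarrow> tgt t = src (hd ws)"
    using a unfolding is_walk_def by (metis hd_conv_nth length_Cons length_greater_0_conv nth_Cons_0 nth_Cons_Suc zero_less_Suc Suc_mono)
  ultimately show "t \<in> D \<and> is_walk D ws \<and> (ws \<noteq> [] \<longrightarrow> tgt t = src (hd ws))"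
    by (auto simp: is_walk_def)
next
  assume a: "t \<in> D \<and> is_walk D ws \<and> (ws \<noteq> [] \<longrightarrow> tgt t = src (hd ws))"
  show "is_walk D (t # ws)" unfolding is_walk_def
  proof (intro conjI allI impI)
    show "set (t # ws) \<subseteq> D" using a by (auto simp: is_walk_def)
    fix i assume i: "Suc i < length (t # ws)"
    show "tgt ((t # ws) ! i) = src ((t # ws) ! Suc i)"
    proof (cases i)
      case 0 then show ?thesis using a i by (cases ws) auto
    next
      case (Suc j) then show ?thesis using a i by (auto simp: is_walk_def)
    qed
  qed
qed

lemma is_walk_path: "ws \<noteq> [] \<Longrightarrow> is_walk D ws \<longleftrightarrow> path D (src (hd ws)) ws (tgt (last ws))"
proof (induction ws)
  case Nil then show ?case by simp
next
  case (Cons t ws)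
  show ?case
  proof (cases "ws = []")
    case True then show ?thesis by (simp add: is_walk_def)
  next
    case False
    have "path D (src (hd (t # ws))) (t # ws) (tgt (last (t # ws))) \<longleftrightarrow>
        t \<in> D \<and> path D (tgt t) ws (tgt (last ws))" using False by simp
    also have "\<dots> \<longleftrightarrow> t \<in> D \<and> tgt t = src (hd ws) \<and> path D (src (hd ws)) ws (tgt (last ws))"
      using False path_hd by fastforce
    finally show ?thesis using Cons False by (auto simp: is_walk_Cons)
  qed
qed

definition evm :: "nat \<Rightarrow> ('q, 'x) trans multiset \<Rightarrow> nat \<Rightarrow> int" where
  "evm k M = (\<lambda>c. if c < k then (\<Sum>t\<in>#M. upd t ! c) else 0)"

lemma evm_plus: "evm k (M + N) = evm k M + evm k N"
  by (auto simp: evm_def fun_eq_iff)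

lemma evm_empty: "evm k {#} = 0"
  by (auto simp: evm_def fun_eq_iff)

lemma evm_sum: "evm k (\<Sum>c\<in>#C. f c) = (\<Sum>c\<in>#C. evm k (f c))"
  by (induction C) (auto simp: evm_plus evm_empty)

lemma effect_zero: "effect k w = replicate k 0 \<longleftrightarrow> evm k (mset w) = 0"
proof -
  have e: "(\<Sum>t\<leftarrow>w. upd t ! c) = (\<Sum>t\<in>#mset w. upd t ! c)" for c
    by (metis mset_map sum_mset_sum_list)
  show ?thesis
    unfolding effect_def evm_def fun_eq_iff
    by (auto simp: e list_eq_iff_nth_eq)
qed

lemma accepting_iff:
  "accepting k q0 D Qf w \<longleftrightarrow> (\<exists>qf\<in>Qf. path D q0 w qf) \<and> evm k (mset w) = 0"
proof (cases "w = []")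
  case True then show ?thesis by (auto simp: accepting_def is_walk_def effect_zero)
next
  case False
  show ?thesis
    unfolding accepting_def effect_zero using False is_walk_path[OF False, of D]
    by (metis path_hd path_last)
qed

lemma walk_input_append: "walk_input (a @ b) = walk_input a @ walk_input b"
  by (simp add: walk_input_def)

lemma walk_input_Cons: "walk_input (t # b) = walk_input [t] @ walk_input b"
  by (simp add: walk_input_def)

lemma subseq_walk_input: "subseq a b \<Longrightarrow> subseq (walk_input a) (walk_input b)"
proof (induction rule: list_emb.induct)
  case (list_emb_Nil ys) then show ?case by (simp add: walk_input_def)
next
  case (list_emb_Cons xs ys y)
  then show ?case by (subst walk_input_Cons) (simp add: walk_input_def list_emb_append2)
next
  case (list_emb_Cons2 x y xs ys)
  then show ?case by (subst (1 2) walk_input_Cons) (simp add: list_emb_append_mono)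
qed


fun endp :: "'q \<Rightarrow> ('q, 'x) trans list \<Rightarrow> 'q" where
  "endp p [] = p"
| "endp p (t # ws) = endp (tgt t) ws"

lemma path_endp: "path D p ws q \<Longrightarrow> endp p ws = q"
  by (induction ws arbitrary: p) auto

lemma path_take: "path D p ws q \<Longrightarrow> path D p (take l ws) (endp p (take l ws))"
  by (metis append_take_drop_id path_append path_endp)

lemma path_drop: "path D p ws q \<Longrightarrow> path D (endp p (take l ws)) (drop l ws) q"
  by (metis append_take_drop_id path_append path_endp)

definition closedw :: "('q, 'x) trans set \<Rightarrow> ('q, 'x) trans list \<Rightarrow> bool" where
  "closedw D c \<longleftrightarrow> c \<noteq> [] \<and> path D (src (hd c)) c (src (hd c))"

lemma decomp:
  assumes Q: "finite Q" "card Q = n" "\<forall>t\<in>D. tgt t \<in> Q"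
  shows "path D p w q \<Longrightarrow> p \<in> Q \<Longrightarrow> \<exists>\<pi> C. path D p \<pi> q \<and> length \<pi> < n \<and>
     mset w = mset \<pi> + (\<Sum>c\<in>#C. mset c) \<and>
     (\<forall>c\<in>#C. closedw D c \<and> length c \<le> n \<and> set c \<subseteq> set w)"
proof (induction "length w" arbitrary: w rule: less_induct)
  case less
  show ?case
  proof (cases "length w < n")
    case True
    then show ?thesis using less.prems by (intro exI[of _ w] exI[of _ "{#}"]) auto
  next
    case False
    define f where "f = (\<lambda>l. endp p (take l w))"
    have fQ: "f l \<in> Q" for l
      using path_Q[OF path_take[OF less.prems(1)] less.prems(2)] Q path_set[OF less.prems(1)]
      by (auto simp: f_def)
    have "\<not> inj_on f {..n}"
    proof
      assume "inj_on f {..n}"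
      then have "card {..n} \<le> card Q" using fQ Q(1) by (intro card_inj_on_le) auto
      then show False using Q(2) by simp
    qed
    then obtain i j where ij: "i < j" "j \<le> n" "f i = f j"
      unfolding inj_on_def by (metis atMost_iff linorder_neqE_nat)
    define c where "c = drop i (take j w)"
    define w' where "w' = take i w @ drop j w"
    have tj: "take j w = take i w @ c"
      using ij by (metis c_def append_take_drop_id min.absorb1 less_imp_le take_take)
    have wsplit: "w = take i w @ c @ drop j w"
      using tj by (metis append.assoc append_take_drop_id)
    have lenc: "length c = j - i" using ij False by (simp add: c_def)
    have p1: "path D p (take i w) (f i)" using path_take[OF less.prems(1)] by (simp add: f_def)
    have p2: "path D (f j) (drop j w) q" using path_drop[OF less.prems(1)] by (simp add: f_def)
    have pj: "path D p (take j w) (f j)" using path_take[OF less.prems(1)] by (simp add: f_def)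
    then obtain r where r: "path D p (take i w) r" "path D r c (f j)" by (auto simp: tj path_append)
    have "r = f i" using r(1) p1 path_det by metis
    with r ij have pc: "path D (f i) c (f i)" by simp
    have cne: "c \<noteq> []" using lenc ij by auto
    have cl: "closedw D c" using pc cne path_hd[OF pc cne] by (simp add: closedw_def)
    have pw': "path D p w' q" using p1 p2 ij by (auto simp: w'_def path_append)
    have lw': "length w' < length w" using ij False by (simp add: w'_def)
    from less.hyps[OF lw' pw' less.prems(2)] obtain \<pi> C where
      IH: "path D p \<pi> q" "length \<pi> < n" "mset w' = mset \<pi> + (\<Sum>c\<in>#C. mset c)"
          "\<forall>c\<in>#C. closedw D c \<and> length c \<le> n \<and> set c \<subseteq> set w'" by blast
    have sw': "set w' \<subseteq> set w" using wsplit by (metis Un_iff set_append subsetI w'_def)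
    have "mset w = mset w' + mset c" using wsplit by (metis mset_append add.commute add.left_commute w'_def)
    then have "mset w = mset \<pi> + (\<Sum>c\<in>#C + {#c#}. mset c)" using IH(3) by simp
    moreover have "\<forall>c'\<in>#C + {#c#}. closedw D c' \<and> length c' \<le> n \<and> set c' \<subseteq> set w"
    proof -
      have "set c \<subseteq> set w" using wsplit by (metis Un_upper1 Un_upper2 set_append subset_trans)
      then show ?thesis using IH(4) sw' cl lenc ij by auto
    qed
    ultimately show ?thesis using IH(1,2) by blast
  qed
qed

lemma extract_zs:
  fixes g :: "'a \<Rightarrow> nat \<Rightarrow> int"
  shows "\<exists>F L. C = F + L \<and> (\<Sum>c\<in>#F. g c) = 0 \<and> (\<forall>N. N \<subseteq># L \<longrightarrow> N \<noteq> {#} \<longrightarrow> (\<Sum>c\<in>#N. g c) \<noteq> 0)"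
proof (induction "size C" arbitrary: C rule: less_induct)
  case less
  show ?case
  proof (cases "\<forall>N. N \<subseteq># C \<longrightarrow> N \<noteq> {#} \<longrightarrow> (\<Sum>c\<in>#N. g c) \<noteq> 0")
    case True then show ?thesis by (intro exI[of _ "{#}"] exI[of _ C]) auto
  next
    case False
    then obtain N where N: "N \<subseteq># C" "N \<noteq> {#}" "(\<Sum>c\<in>#N. g c) = 0" by blast
    have "size N > 0" using N(2) by (simp add: nonempty_has_size)
    then have "size (C - N) < size C" using N(1) size_Diff_submset[OF N(1)] size_mset_mono[OF N(1)] by simp
    from less.hyps[OF this] obtain F L where
      FL: "C - N = F + L" "(\<Sum>c\<in>#F. g c) = 0" "\<forall>N. N \<subseteq># L \<longrightarrow> N \<noteq> {#} \<longrightarrow> (\<Sum>c\<in>#N. g c) \<noteq> 0" by blast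
    have "C = (N + F) + L" using FL(1) N(1) by (metis subset_mset.add_diff_inverse add.assoc)
    moreover have "(\<Sum>c\<in>#N + F. g c) = 0" using N(3) FL(2) by simp
    ultimately show ?thesis using FL(3) by blast
  qed
qed


lemma closedw_I: "path D p c p \<Longrightarrow> c \<noteq> [] \<Longrightarrow> closedw D c"
  using path_hd by (fastforce simp: closedw_def)

lemma rotate_at:
  assumes "closedw D g" "t \<in> set g"
  shows "\<exists>r. path D (src t) r (src t) \<and> r \<noteq> [] \<and> hd r = t \<and> mset r = mset g"
proof -
  obtain a b where g: "g = a @ t # b" using assms(2) by (metis split_list)
  let ?p = "src (hd g)"
  have "path D ?p (a @ t # b) ?p" using assms(1) g by (simp add: closedw_def)
  then obtain x where x: "path D ?p a x" "path D x (t # b) ?p" by (auto simp: path_append)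
  then have "x = src t" by simp
  then have "path D (src t) ((t # b) @ a) (src t)" using x by (auto simp: path_append)
  then show ?thesis using g by (intro exI[of _ "t # b @ a"]) auto
qed

definition states :: "('q, 'x) trans list \<Rightarrow> 'q set" where
  "states c = src ` set c"

lemma splice:
  assumes "closedw D g1" "closedw D g2" "v \<in> states g1" "v \<in> states g2"
  shows "\<exists>g. closedw D g \<and> mset g = mset g1 + mset g2"
proof -
  obtain t1 where t1: "t1 \<in> set g1" "src t1 = v" using assms(3) by (auto simp: states_def)
  obtain t2 where t2: "t2 \<in> set g2" "src t2 = v" using assms(4) by (auto simp: states_def)
  obtain r where r: "path D v r v" "mset r = mset g2" using rotate_at[OF assms(2) t2(1)] t2 by auto
  obtain a b where g: "g1 = a @ t1 # b" using t1(1) by (metis split_list)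
  let ?p = "src (hd g1)"
  have "path D ?p (a @ t1 # b) ?p" using assms(1) g by (simp add: closedw_def)
  then obtain x where x: "path D ?p a x" "path D x (t1 # b) ?p" by (auto simp: path_append)
  then have "x = v" using t1 by simp
  then have "path D ?p (a @ r @ t1 # b) ?p" using x r by (auto simp: path_append)
  then have "closedw D (a @ r @ t1 # b)" by (rule closedw_I) simp
  moreover have "mset (a @ r @ t1 # b) = mset g1 + mset g2" using g r by simp
  ultimately show ?thesis by blast
qed

lemma merge:
  "(\<forall>c\<in>#F. closedw D c \<and> set c \<subseteq> T) \<Longrightarrow>
   \<exists>G. (\<Sum>g\<in>#G. mset g) = (\<Sum>c\<in>#F. mset c) \<and> (\<forall>g\<in>#G. closedw D g \<and> set g \<subseteq> T) \<and>
     (\<forall>g1 g2. g1 \<in># G \<longrightarrow> g2 \<in># G - {#g1#} \<longrightarrow> states g1 \<inter> states g2 = {})"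
proof (induction "size F" arbitrary: F rule: less_induct)
  case less
  show ?case
  proof (cases "\<forall>g1 g2. g1 \<in># F \<longrightarrow> g2 \<in># F - {#g1#} \<longrightarrow> states g1 \<inter> states g2 = {}")
    case True then show ?thesis using less.prems by blast
  next
    case False
    then obtain g1 g2 v where g: "g1 \<in># F" "g2 \<in># F - {#g1#}" "v \<in> states g1" "v \<in> states g2" by blast
    define R where "R = F - {#g1#} - {#g2#}"
    have F1: "F - {#g1#} = add_mset g2 R" unfolding R_def using insert_DiffM[OF g(2)] by simp
    have "F = add_mset g1 (F - {#g1#})" using g(1) by (simp add: insert_DiffM)
    then have F: "F = R + {#g1#} + {#g2#}" using F1 by simp
    have cl: "closedw D g1" "closedw D g2" "set g1 \<subseteq> T" "set g2 \<subseteq> T" using less.prems F by auto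
    obtain g0 where g0: "closedw D g0" "mset g0 = mset g1 + mset g2" using splice[OF cl(1,2) g(3,4)] by blast
    have sg0: "set g0 \<subseteq> T" using cl(3,4) g0(2) by (metis Un_subset_iff set_mset_mset set_mset_union)
    define F' where "F' = R + {#g0#}"
    have "size F' < size F" using F by (simp add: F'_def)
    moreover have "\<forall>c\<in>#F'. closedw D c \<and> set c \<subseteq> T" using less.prems F g0 sg0 by (auto simp: F'_def)
    ultimately obtain G where G: "(\<Sum>g\<in>#G. mset g) = (\<Sum>c\<in>#F'. mset c)" "\<forall>g\<in>#G. closedw D g \<and> set g \<subseteq> T"
      "\<forall>g1 g2. g1 \<in># G \<longrightarrow> g2 \<in># G - {#g1#} \<longrightarrow> states g1 \<inter> states g2 = {}" using less.hyps by blast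
    have "(\<Sum>c\<in>#F'. mset c) = (\<Sum>c\<in>#F. mset c)" using F g0 by (simp add: F'_def add.assoc)
    then show ?thesis using G by metis
  qed
qed


definition good :: "('q, 'x) trans list multiset \<Rightarrow> ('q, 'x) trans \<Rightarrow> bool" where
  "good G t \<longleftrightarrow> (\<exists>g\<in>#G. t \<in> set g)"

definition grp :: "('q, 'x) trans list multiset \<Rightarrow> ('q, 'x) trans \<Rightarrow> ('q, 'x) trans list" where
  "grp G t = (SOME g. g \<in># G \<and> t \<in> set g)"

lemma grp: "good G t \<Longrightarrow> grp G t \<in># G \<and> t \<in> set (grp G t)"
  unfolding good_def grp_def by (rule someI_ex) blast

definition Yl :: "('q, 'x) trans list \<Rightarrow> 'x set" where
  "Yl g = {a. \<exists>t\<in>set g. lbl t = Some a}"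

definition li :: "('q, 'x) trans \<Rightarrow> 'x list" where
  "li t = (case lbl t of None \<Rightarrow> [] | Some a \<Rightarrow> [a])"

lemma walk_input_simps: "walk_input [] = []" "walk_input (t # ws) = li t @ walk_input ws"
  by (auto simp: walk_input_def li_def)

fun mk :: "('q, 'x) trans list multiset \<Rightarrow> ('q, 'x) trans list option \<Rightarrow> ('q, 'x) trans list \<Rightarrow> 'x factor list" where
  "mk G prev [] = []"
| "mk G prev (t # ws) = (if good G t then
      (if prev = Some (grp G t) then mk G prev ws else Star (Yl (grp G t)) # mk G (Some (grp G t)) ws)
    else Opt (lbl t) # mk G None ws)"

definition pend :: "('q, 'x) trans list option \<Rightarrow> 'x list set \<Rightarrow> 'x list set" where
  "pend prev A = (case prev of None \<Rightarrow> A | Some g \<Rightarrow> conc (lists (Yl g)) A)"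

definition flushable :: "('q, 'x) trans list option \<Rightarrow> 'x list \<Rightarrow> bool" where
  "flushable prev v = (case prev of None \<Rightarrow> v = [] | Some g \<Rightarrow> v \<in> lists (Yl g))"

lemma concI: "u \<in> A \<Longrightarrow> v \<in> B \<Longrightarrow> u @ v \<in> conc A B"
  by (auto simp: conc_def)

lemma concE: "w \<in> conc A B \<Longrightarrow> \<exists>u v. w = u @ v \<and> u \<in> A \<and> v \<in> B"
  by (auto simp: conc_def)

lemma li_factor: "li t \<in> factor_lang (Opt (lbl t))"
  by (cases "lbl t") (auto simp: li_def)

lemma li_Yl: "t \<in> set g \<Longrightarrow> set (li t) \<subseteq> Yl g"
  by (cases "lbl t") (auto simp: li_def Yl_def)

lemma pend_intro: "flushable prev v0 \<Longrightarrow> v1 \<in> A \<Longrightarrow> v0 @ v1 \<in> pend prev A"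
  by (cases prev) (auto simp: flushable_def pend_def conc_def)

lemma pend_elim: "v \<in> pend prev A \<Longrightarrow> \<exists>v0 v1. v = v0 @ v1 \<and> flushable prev v0 \<and> v1 \<in> A"
  by (cases prev) (auto simp: flushable_def pend_def conc_def)

lemma mk_contains:
  "flushable prev v \<Longrightarrow> v @ walk_input ws \<in> pend prev (ideal_lang (mk G prev ws))"
proof (induction ws arbitrary: prev v)
  case Nil then show ?case using pend_intro[of prev v "[]" "{[]}"] by (simp add: walk_input_simps)
next
  case (Cons t ws)
  show ?case
  proof (cases "good G t")
    case True
    note gt = grp[OF True]
    show ?thesis
    proof (cases "prev = Some (grp G t)")
      case True
      have "flushable prev (v @ li t)" using Cons.prems True li_Yl[OF conjunct2[OF gt]]
        by (auto simp: flushable_def)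
      from Cons.IH[OF this] show ?thesis using True \<open>good G t\<close> by (simp add: walk_input_simps)
    next
      case False
      have "flushable (Some (grp G t)) (li t)" using li_Yl[OF conjunct2[OF gt]]
        by (auto simp: flushable_def)
      from Cons.IH[OF \<open>flushable (Some (grp G t)) (li t)\<close>]
      have "li t @ walk_input ws \<in> ideal_lang (Star (Yl (grp G t)) # mk G (Some (grp G t)) ws)"
        by (simp add: pend_def)
      then show ?thesis using False \<open>good G t\<close> Cons.prems pend_intro
        by (simp add: walk_input_simps)
    qed
  next
    case False
    have "walk_input ws \<in> ideal_lang (mk G None ws)" using Cons.IH[of None "[]"]
      by (simp add: flushable_def pend_def)
    then have "li t @ walk_input ws \<in> ideal_lang (Opt (lbl t) # mk G None ws)"
      using li_factor[of t] by (simp add: concI)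
    then show ?thesis using False Cons.prems pend_intro by (simp add: walk_input_simps)
  qed
qed


lemma tgt_states: "closedw D g \<Longrightarrow> t \<in> set g \<Longrightarrow> tgt t \<in> states g"
proof -
  assume a: "closedw D g" "t \<in> set g"
  from rotate_at[OF a] obtain r where r: "path D (src t) r (src t)" "r \<noteq> []" "hd r = t" "mset r = mset g"
    by blast
  then obtain rest where rr: "r = t # rest" by (cases r) auto
  have sr: "set r = set g" using r(4) by (metis set_mset_mset)
  show ?thesis
  proof (cases rest)
    case Nil then show ?thesis using r rr a(2) by (auto simp: states_def)
  next
    case (Cons t' rest')
    then have "tgt t = src t'" using r(1) rr by simp
    moreover have "t' \<in> set g" using sr rr Cons by auto
    ultimately show ?thesis by (auto simp: states_def)
  qed
qed

lemma src_states: "t \<in> set g \<Longrightarrow> src t \<in> states g"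
  by (auto simp: states_def)

lemma mk_length:
  assumes disj: "\<forall>g1 g2. g1 \<in># G \<longrightarrow> g2 \<in># G - {#g1#} \<longrightarrow> states g1 \<inter> states g2 = {}"
    and clG: "\<forall>g\<in>#G. closedw D g"
  shows "path D p ws q \<Longrightarrow> (\<forall>g. prev = Some g \<longrightarrow> g \<in># G \<and> p \<in> states g) \<Longrightarrow>
    length (mk G prev ws) \<le> 2 * length (filter (\<lambda>t. \<not> good G t) ws) + (if prev = None then 1 else 0)"
proof (induction ws arbitrary: p prev)
  case Nil then show ?case by simp
next
  case (Cons t ws)
  have pt: "t \<in> D" "src t = p" "path D (tgt t) ws q" using Cons.prems(1) by auto
  show ?case
  proof (cases "good G t")
    case True
    note gt = grp[OF True]
    have tg: "tgt t \<in> states (grp G t)" using tgt_states[of D "grp G t" t] gt clG by auto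
    show ?thesis
    proof (cases "prev = Some (grp G t)")
      case True
      have "length (mk G prev ws) \<le> 2 * length (filter (\<lambda>t. \<not> good G t) ws) + (if prev = None then 1 else 0)"
        using Cons.IH[OF pt(3), of "Some (grp G t)"] True gt tg by auto
      then show ?thesis using True \<open>good G t\<close> by simp
    next
      case False
      have "prev = None"
      proof (rule ccontr)
        assume "prev \<noteq> None"
        then obtain g where g: "prev = Some g" by auto
        then have "g \<in># G" "p \<in> states g" using Cons.prems(2) by auto
        moreover have "grp G t \<noteq> g" using False g by auto
        then have "grp G t \<in># G - {#g#}" using gt by (simp add: in_diff_count)
        moreover have "p \<in> states (grp G t)" using gt pt(2) src_states by metis
        ultimately show False using disj by blast
      qed
      have "length (mk G (Some (grp G t)) ws) \<le> 2 * length (filter (\<lambda>t. \<not> good G t) ws)"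
        using Cons.IH[OF pt(3), of "Some (grp G t)"] gt tg by auto
      then show ?thesis using False \<open>good G t\<close> \<open>prev = None\<close> by simp
    qed
  next
    case False
    have "length (mk G None ws) \<le> 2 * length (filter (\<lambda>t. \<not> good G t) ws) + 1"
      using Cons.IH[OF pt(3), of None] by auto
    then show ?thesis using False by simp
  qed
qed

lemma subseq_single: "a \<in> set xs \<Longrightarrow> subseq [a] xs"
proof -
  assume "a \<in> set xs"
  then obtain y z where "xs = y @ a # z" by (metis split_list)
  then show ?thesis by (simp add: list_emb_append2)
qed

lemma letter_in_input: "t \<in> set ws \<Longrightarrow> lbl t = Some a \<Longrightarrow> a \<in> set (walk_input ws)"
  by (induction ws) (auto simp: walk_input_simps li_def)

lemma flush_one:
  assumes cl: "closedw D g" and p: "p \<in> states g"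
  shows "v0 \<in> lists (Yl g) \<Longrightarrow> \<exists>c n. path D p c p \<and> mset c = repeat_mset n (mset g) \<and> subseq v0 (walk_input c)"
proof (induction v0)
  case Nil then show ?case by (intro exI[of _ "[]"] exI[of _ 0]) auto
next
  case (Cons a v0)
  then obtain c n where c: "path D p c p" "mset c = repeat_mset n (mset g)" "subseq v0 (walk_input c)" by auto
  obtain t' where t': "t' \<in> set g" "src t' = p" using p by (auto simp: states_def)
  from rotate_at[OF cl t'(1)] t' obtain r where r: "path D p r p" "mset r = mset g" by auto
  obtain t where t: "t \<in> set g" "lbl t = Some a" using Cons.prems by (auto simp: Yl_def)
  have "t \<in> set r" using t r(2) by (metis set_mset_mset)
  then have "subseq [a] (walk_input r)" using t by (intro subseq_single letter_in_input)
  then have "subseq ([a] @ v0) (walk_input r @ walk_input c)" using c(3) by (rule list_emb_append_mono)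
  moreover have "path D p (r @ c) p" using r c by (auto simp: path_append)
  moreover have "mset (r @ c) = repeat_mset (Suc n) (mset g)" using r c by simp
  ultimately show ?case by (intro exI[of _ "r @ c"] exI[of _ "Suc n"]) (simp add: walk_input_append)
qed

definition sumG :: "('q, 'x) trans list multiset \<Rightarrow> ('q, 'x) trans multiset" where
  "sumG N = (\<Sum>g\<in>#N. mset g)"

lemma flush:
  assumes clG: "\<forall>g\<in>#G. closedw D g"
    and inv: "\<forall>g. prev = Some g \<longrightarrow> g \<in># G \<and> p \<in> states g"
    and fl: "flushable prev v0"
  shows "\<exists>c N. path D p c p \<and> mset c = sumG N \<and> set_mset N \<subseteq> set_mset G \<and> subseq v0 (walk_input c)"
proof (cases prev)
  case None then show ?thesis using fl
    by (intro exI[of _ "[]"] exI[of _ "{#}"]) (auto simp: flushable_def sumG_def)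
next
  case (Some g)
  then have g: "g \<in># G" "p \<in> states g" "v0 \<in> lists (Yl g)" using inv fl by (auto simp: flushable_def)
  from flush_one[OF _ g(2) g(3)] clG g(1) obtain c n where
    c: "path D p c p" "mset c = repeat_mset n (mset g)" "subseq v0 (walk_input c)" by blast
  have "sumG (replicate_mset n g) = repeat_mset n (mset g)"
    by (induction n) (auto simp: sumG_def)
  then show ?thesis using c g(1) by (intro exI[of _ c] exI[of _ "replicate_mset n g"]) auto
qed


lemma subseq_li_opt: "oo \<in> factor_lang (Opt (lbl t)) \<Longrightarrow> subseq oo (li t)"
  by (cases "lbl t") (auto simp: li_def)

lemma mk_sub:
  assumes clG: "\<forall>g\<in>#G. closedw D g"
  shows "path D p ws q \<Longrightarrow> (\<forall>g. prev = Some g \<longrightarrow> g \<in># G \<and> p \<in> states g) \<Longrightarrow>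
    v \<in> pend prev (ideal_lang (mk G prev ws)) \<Longrightarrow>
    \<exists>ws' N. path D p ws' q \<and> mset ws' = mset ws + sumG N \<and> set_mset N \<subseteq> set_mset G \<and>
       subseq v (walk_input ws')"
proof (induction ws arbitrary: p prev v)
  case Nil
  from pend_elim[OF Nil.prems(3)] obtain v0 v1 where v: "v = v0 @ v1" "flushable prev v0" "v1 = []"
    by auto
  from flush[OF clG Nil.prems(2) v(2)] obtain c N where
    c: "path D p c p" "mset c = sumG N" "set_mset N \<subseteq> set_mset G" "subseq v0 (walk_input c)" by blast
  then show ?case using Nil.prems(1) v by (intro exI[of _ c] exI[of _ N]) auto
next
  case (Cons t ws)
  have pt: "t \<in> D" "src t = p" "path D (tgt t) ws q" using Cons.prems(1) by auto
  from pend_elim[OF Cons.prems(3)] obtain v0 v1 where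
    v: "v = v0 @ v1" "flushable prev v0" "v1 \<in> ideal_lang (mk G prev (t # ws))" by blast
  from flush[OF clG Cons.prems(2) v(2)] obtain c N0 where
    c: "path D p c p" "mset c = sumG N0" "set_mset N0 \<subseteq> set_mset G" "subseq v0 (walk_input c)" by blast
  have "\<exists>oo v2 prev'. v1 = oo @ v2 \<and> subseq oo (li t) \<and> v2 \<in> pend prev' (ideal_lang (mk G prev' ws)) \<and>
      (\<forall>g. prev' = Some g \<longrightarrow> g \<in># G \<and> tgt t \<in> states g)"
  proof (cases "good G t")
    case True
    note gt = grp[OF True]
    have tg: "tgt t \<in> states (grp G t)" using tgt_states[of D "grp G t" t] gt clG by auto
    show ?thesis
    proof (cases "prev = Some (grp G t)")
      case True
      have "v1 \<in> ideal_lang (mk G prev ws)" using v(3) True \<open>good G t\<close> by simp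
      then have "[] @ v1 \<in> pend prev (ideal_lang (mk G prev ws))"
        by (intro pend_intro) (cases prev, auto simp: flushable_def)
      then show ?thesis using True gt tg by (intro exI[of _ "[]"] exI[of _ v1] exI[of _ prev]) auto
    next
      case False
      have "v1 \<in> pend (Some (grp G t)) (ideal_lang (mk G (Some (grp G t)) ws))"
        using v(3) False \<open>good G t\<close> by (simp add: pend_def)
      then show ?thesis using gt tg
        by (intro exI[of _ "[]"] exI[of _ v1] exI[of _ "Some (grp G t)"]) auto
    qed
  next
    case False
    then have "v1 \<in> conc (factor_lang (Opt (lbl t))) (ideal_lang (mk G None ws))" using v(3) by simp
    then obtain oo v2 where oo: "v1 = oo @ v2" "oo \<in> factor_lang (Opt (lbl t))" "v2 \<in> ideal_lang (mk G None ws)"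
      by (auto dest: concE)
    then show ?thesis using subseq_li_opt[OF oo(2)]
      by (intro exI[of _ oo] exI[of _ v2] exI[of _ None]) (auto simp: pend_def)
  qed
  then obtain oo v2 prev' where oo: "v1 = oo @ v2" "subseq oo (li t)"
    "v2 \<in> pend prev' (ideal_lang (mk G prev' ws))" "\<forall>g. prev' = Some g \<longrightarrow> g \<in># G \<and> tgt t \<in> states g"
    by blast
  from Cons.IH[OF pt(3) oo(4) oo(3)] obtain ws'' N where
    IH: "path D (tgt t) ws'' q" "mset ws'' = mset ws + sumG N" "set_mset N \<subseteq> set_mset G" "subseq v2 (walk_input ws'')"
    by blast
  have "path D p (c @ t # ws'') q" using c(1) pt IH(1) by (auto simp: path_append)
  moreover have "mset (c @ t # ws'') = mset (t # ws) + sumG (N0 + N)" using c(2) IH(2)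
    by (simp add: sumG_def)
  moreover have "set_mset (N0 + N) \<subseteq> set_mset G" using c(3) IH(3) by auto
  moreover have "subseq v (walk_input (c @ t # ws''))"
    using v(1) oo(1) c(4) oo(2) IH(4)
    by (simp add: walk_input_append walk_input_simps list_emb_append_mono)
  ultimately show ?case by blast
qed

lemma insert_closed:
  assumes "path D p ws q" "t \<in> set ws" "path D (src t) c (src t)"
  shows "\<exists>ws'. path D p ws' q \<and> mset ws' = mset ws + mset c \<and> subseq ws ws'"
proof -
  obtain a b where ab: "ws = a @ t # b" using assms(2) by (metis split_list)
  from assms(1) ab obtain r where r: "path D p a r" "path D r (t # b) q" by (auto simp: path_append)
  then have "r = src t" by simp
  then have "path D p (a @ c @ t # b) q" using r assms(3) by (auto simp: path_append)
  moreover have "subseq ws (a @ c @ t # b)" using ab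
    by (simp add: list_emb_append_mono list_emb_append2)
  ultimately show ?thesis using ab by (intro exI[of _ "a @ c @ t # b"]) auto
qed

lemma insert_many:
  assumes clG: "\<forall>g\<in>#G. closedw D g \<and> set g \<subseteq> set w0"
  shows "path D p ws q \<Longrightarrow> set w0 \<subseteq> set ws \<Longrightarrow> set_mset N \<subseteq> set_mset G \<Longrightarrow>
    \<exists>ws'. path D p ws' q \<and> mset ws' = mset ws + sumG N \<and> subseq ws ws'"
proof (induction N arbitrary: ws)
  case empty then show ?case by (intro exI[of _ ws]) (auto simp: sumG_def)
next
  case (add g N)
  have "\<exists>ws'. path D p ws' q \<and> mset ws' = mset ws + sumG N \<and> subseq ws ws'"
    by (rule add.IH) (use add.prems in auto)
  then obtain ws1 where ws1: "path D p ws1 q" "mset ws1 = mset ws + sumG N" "subseq ws ws1" by auto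
  have g: "closedw D g" "set g \<subseteq> set w0" using add.prems(3) clG by auto
  then have "hd g \<in> set g" by (auto simp: closedw_def)
  then have "hd g \<in> set ws" using g(2) add.prems(2) by blast
  moreover have "set ws \<subseteq> set ws1" using ws1(2) by (metis set_mset_mset set_mset_union Un_upper1)
  ultimately have h: "hd g \<in> set ws1" by auto
  from insert_closed[OF ws1(1) h] g(1) obtain ws2 where
    ws2: "path D p ws2 q" "mset ws2 = mset ws1 + mset g" "subseq ws1 ws2" by (auto simp: closedw_def)
  have "mset ws2 = mset ws + sumG (add_mset g N)" using ws2(2) ws1(2) by (simp add: sumG_def)
  moreover have "subseq ws ws2" using ws1(3) ws2(3) by (rule subseq_order.order_trans)
  ultimately show ?case using ws2(1) by blast
qed


lemma sum_apply: "(\<Sum>i\<in>I. f i) c = (\<Sum>i\<in>I. f i c)"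
  by (induction I rule: infinite_finite_induct) auto

lemma sum_mset_apply: "(\<Sum>i\<in>#M. f i) c = (\<Sum>i\<in>#M. f i c)"
  by (induction M) auto

lemma in_sum_mset_iff: "t \<in># (\<Sum>c\<in>#F. mset c) \<longleftrightarrow> (\<exists>c\<in>#F. t \<in> set c)"
  by (induction F) auto

lemma size_sum_mset: "size (\<Sum>c\<in>#F. mset c) = (\<Sum>c\<in>#F. length c)"
  by (induction F) auto

lemma sum_len_bound: "\<forall>c\<in>#L. length c \<le> n \<Longrightarrow> (\<Sum>c\<in>#L. length c) \<le> n * size L"
  by (induction L) auto

lemma abs_sum_mset_bound:
  fixes f :: "'a \<Rightarrow> int"
  shows "\<forall>t\<in>#M. \<bar>f t\<bar> \<le> 1 \<Longrightarrow> \<bar>\<Sum>t\<in>#M. f t\<bar> \<le> int (size M)"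
proof (induction M)
  case empty then show ?case by simp
next
  case (add x M)
  have "\<bar>\<Sum>t\<in>#add_mset x M. f t\<bar> \<le> \<bar>f x\<bar> + \<bar>\<Sum>t\<in>#M. f t\<bar>" by (simp add: abs_triangle_ineq)
  also have "\<dots> \<le> 1 + int (size M)" using add by (intro add_mono) auto
  finally show ?case by simp
qed

lemma evm_bound:
  assumes upd: "\<forall>t\<in>\<Delta>. length (upd t) = k \<and> set (upd t) \<subseteq> {-1, 0, 1}"
    and M: "set_mset M \<subseteq> \<Delta>"
  shows "\<bar>evm k M c\<bar> \<le> int (size M)"
proof (cases "c < k")
  case True
  have "\<forall>t\<in>#M. \<bar>upd t ! c\<bar> \<le> 1"
  proof
    fix t assume "t \<in># M"
    then have "length (upd t) = k" "set (upd t) \<subseteq> {-1, 0, 1}" using upd M by auto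
    then have "upd t ! c \<in> {-1, 0, 1}" using True by (metis nth_mem subsetD)
    then show "\<bar>upd t ! c\<bar> \<le> 1" by auto
  qed
  then show ?thesis using True abs_sum_mset_bound by (simp add: evm_def)
qed (simp add: evm_def)

lemma evm_repeat: "evm k (repeat_mset M X) = of_nat M * evm k X"
  by (induction M) (auto simp: evm_plus evm_empty algebra_simps)

lemma sum_nth_mset:
  fixes f :: "'a \<Rightarrow> 'b::comm_monoid_add"
  shows "(\<Sum>i<length xs. f (xs ! i)) = (\<Sum>c\<in>#mset xs. f c)"
proof -
  have "(\<Sum>i<length xs. f (xs ! i)) = sum_list (map f xs)"
    by (simp add: sum_list_sum_nth lessThan_atLeast0)
  also have "\<dots> = (\<Sum>c\<in>#mset xs. f c)" by (metis mset_map sum_mset_sum_list)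
  finally show ?thesis .
qed

lemma sum_mset_nth_subset:
  fixes f :: "'a \<Rightarrow> 'b::comm_monoid_add"
  assumes "I \<subseteq> {..<length xs}"
  shows "image_mset (nth xs) (mset_set I) \<subseteq># mset xs"
    and "(\<Sum>c\<in>#image_mset (nth xs) (mset_set I). f c) = (\<Sum>i\<in>I. f (xs ! i))"
proof -
  have "mset xs = image_mset (nth xs) (mset_set {..<length xs})"
    by (metis map_nth mset_map mset_set_upto_eq_mset_upto)
  moreover have "mset_set I \<subseteq># mset_set {..<length xs}"
    using assms by (intro subset_imp_msubset_mset_set) auto
  ultimately show "image_mset (nth xs) (mset_set I) \<subseteq># mset xs"
    by (metis image_mset_subseteq_mono)
  show "(\<Sum>c\<in>#image_mset (nth xs) (mset_set I). f c) = (\<Sum>i\<in>I. f (xs ! i))"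
    by (simp add: sum_unfold_sum_mset image_mset.compositionality comp_def)
qed

lemma L_bound:
  fixes L :: "('q, 'x) trans list multiset"
  assumes upd: "\<forall>t\<in>\<Delta>. length (upd t) = k \<and> set (upd t) \<subseteq> {-1, 0, 1}"
    and Ls: "\<forall>c\<in>#L. set c \<subseteq> \<Delta> \<and> length c \<le> n"
    and zsf: "\<forall>N. N \<subseteq># L \<longrightarrow> N \<noteq> {#} \<longrightarrow> (\<Sum>c\<in>#N. evm k (mset c)) \<noteq> 0"
    and sL: "\<forall>c. \<bar>(\<Sum>c'\<in>#L. evm k (mset c')) c\<bar> \<le> int n"
  shows "Suc (size L) \<le> (2 * k * n + 1) ^ k"
proof -
  obtain xs where xs: "mset xs = L" using ex_mset by blast
  define w where "w = (\<lambda>i. evm k (mset (xs ! i)))"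
  have "Suc (length xs) \<le> (2 * k * n + 1) ^ k"
  proof (rule zsf_bound)
    show "\<forall>i<length xs. \<forall>c\<ge>k. w i c = 0" by (simp add: w_def evm_def)
    show "\<forall>i<length xs. \<forall>c. \<bar>w i c\<bar> \<le> int n"
    proof (intro allI impI)
      fix i c assume i: "i < length xs"
      then have "xs ! i \<in># L" using xs by (metis nth_mem set_mset_mset)
      then have "set (xs ! i) \<subseteq> \<Delta>" "length (xs ! i) \<le> n" using Ls by auto
      then have "\<bar>w i c\<bar> \<le> int (size (mset (xs ! i)))" unfolding w_def
        by (intro evm_bound[OF upd]) auto
      then show "\<bar>w i c\<bar> \<le> int n" using \<open>length (xs ! i) \<le> n\<close> by simp
    qed
    show "\<forall>c. \<bar>\<Sum>i<length xs. w i c\<bar> \<le> int n"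
    proof
      fix c
      have "(\<Sum>i<length xs. w i c) = (\<Sum>i<length xs. w i) c" by (simp add: sum_apply)
      also have "\<dots> = (\<Sum>c'\<in>#L. evm k (mset c')) c" unfolding w_def using sum_nth_mset[of "\<lambda>c. evm k (mset c)" xs] xs
        by simp
      finally show "\<bar>\<Sum>i<length xs. w i c\<bar> \<le> int n" using sL by simp
    qed
    show "\<forall>I\<subseteq>{..<length xs}. I \<noteq> {} \<longrightarrow> (\<exists>c. (\<Sum>i\<in>I. w i c) \<noteq> 0)"
    proof (intro allI impI)
      fix I assume I: "I \<subseteq> {..<length xs}" "I \<noteq> {}"
      define N where "N = image_mset (nth xs) (mset_set I)"
      have "N \<subseteq># L" using sum_mset_nth_subset(1)[OF I(1)] xs by (simp add: N_def)
      moreover have "N \<noteq> {#}" using I by (simp add: N_def finite_subset mset_set_empty_iff)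
      ultimately have "(\<Sum>c\<in>#N. evm k (mset c)) \<noteq> 0" using zsf by blast
      moreover have "(\<Sum>c\<in>#N. evm k (mset c)) = (\<Sum>i\<in>I. w i)"
        unfolding N_def w_def by (rule sum_mset_nth_subset(2)[OF I(1)])
      ultimately obtain c where "(\<Sum>i\<in>I. w i) c \<noteq> 0" by (metis zero_fun_def ext)
      then show "\<exists>c. (\<Sum>i\<in>I. w i c) \<noteq> 0" by (metis sum_apply)
    qed
  qed
  then show ?thesis using xs by auto
qed

lemma arith_bound:
  fixes n k :: nat
  assumes "n \<ge> 1"
  shows "2 * n * (2 * k * n + 1) ^ k \<le> (5 * n) ^ (7 * (k + 1)^2)"
proof -
  have k5: "2 * k + 1 \<le> 5 ^ (k + 1)"
  proof (induction k)
    case 0 then show ?case by simp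
  next
    case (Suc k) then show ?case by simp
  qed
  have "n \<le> n ^ (k + 1)" using assms by (simp add: self_le_power)
  have a: "2 * k * n + 1 \<le> (5 * n) ^ (k + 1)"
  proof -
    have "2 * k * n + 1 \<le> (2 * k + 1) * n" using assms by (simp add: algebra_simps)
    also have "\<dots> \<le> 5 ^ (k + 1) * n ^ (k + 1)" using k5 \<open>n \<le> n ^ (k + 1)\<close> by (rule mult_le_mono)
    also have "\<dots> = (5 * n) ^ (k + 1)" by (simp add: power_mult_distrib)
    finally show ?thesis .
  qed
  have b1: "1 \<le> 5 * n" using assms by simp
  have "2 * n * (2 * k * n + 1) ^ k \<le> (5 * n) * ((5 * n) ^ (k + 1)) ^ k"
    using a by (intro mult_le_mono power_mono) auto
  also have "\<dots> = (5 * n) ^ Suc ((k + 1) * k)" by (simp only: power_mult power_Suc)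
  also have "\<dots> \<le> (5 * n) ^ (7 * (k + 1)^2)"
    using b1 by (intro power_increasing) (auto simp: power2_eq_square algebra_simps)
  finally show ?thesis .
qed


lemma mk_factors: "f \<in> set (mk G prev ws) \<Longrightarrow> (\<exists>t\<in>set ws. f = Opt (lbl t)) \<or> (\<exists>g\<in>#G. f = Star (Yl g))"
  by (induction ws arbitrary: prev) (auto split: if_splits dest: grp)

lemma main_word:
  fixes w :: "('q, 'x) trans list"
  assumes bca: "blind_counter_automaton k Q X q0 \<Delta> Qf"
    and nQ: "card Q = n" and n1: "n \<ge> 1"
    and acc: "accepting k q0 \<Delta> Qf w"
  shows "\<exists>e. ideal_expr X e \<and> length e \<le> 2 * n * (2 * k * n + 1) ^ k \<and>
    walk_input w \<in> ideal_lang e \<and> ideal_lang e \<subseteq> down_closure (bca_lang k q0 \<Delta> Qf)"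
proof -
  note B = bca[unfolded blind_counter_automaton_def]
  from acc obtain qf where qf: "qf \<in> Qf" "path \<Delta> q0 w qf" and ev0: "evm k (mset w) = 0"
    by (auto simp: accepting_iff)
  have tQ: "\<forall>t\<in>\<Delta>. tgt t \<in> Q" using B by auto
  have updD: "\<forall>t\<in>\<Delta>. length (upd t) = k \<and> set (upd t) \<subseteq> {-1, 0, 1}" using B by auto
  from decomp[OF _ nQ tQ qf(2)] B obtain \<pi> C where
    dc: "path \<Delta> q0 \<pi> qf" "length \<pi> < n" "mset w = mset \<pi> + (\<Sum>c\<in>#C. mset c)"
        "\<forall>c\<in>#C. closedw \<Delta> c \<and> length c \<le> n \<and> set c \<subseteq> set w" by blast
  from extract_zs[of C "\<lambda>c. evm k (mset c)"] obtain F L where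
    FL: "C = F + L" "(\<Sum>c\<in>#F. evm k (mset c)) = 0"
        "\<forall>N. N \<subseteq># L \<longrightarrow> N \<noteq> {#} \<longrightarrow> (\<Sum>c\<in>#N. evm k (mset c)) \<noteq> 0" by blast
  have "\<forall>c\<in>#F. closedw \<Delta> c \<and> set c \<subseteq> set w" using dc(4) FL(1) by auto
  from merge[OF this] obtain G where
    G: "(\<Sum>g\<in>#G. mset g) = (\<Sum>c\<in>#F. mset c)" "\<forall>g\<in>#G. closedw \<Delta> g \<and> set g \<subseteq> set w"
       "\<forall>g1 g2. g1 \<in># G \<longrightarrow> g2 \<in># G - {#g1#} \<longrightarrow> states g1 \<inter> states g2 = {}" by blast
  have clG: "\<forall>g\<in>#G. closedw \<Delta> g" using G(2) by auto
  have sw: "set w \<subseteq> \<Delta>" using path_set[OF qf(2)] .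
  define e where "e = mk G None w"
  have evG: "evm k (sumG G) = 0"
    using G(1) FL(2) by (simp add: sumG_def evm_sum)
  have ie: "ideal_expr X e"
    unfolding ideal_expr_def
  proof
    fix f assume "f \<in> set e"
    then have "(\<exists>t\<in>set w. f = Opt (lbl t)) \<or> (\<exists>g\<in>#G. f = Star (Yl g))"
      unfolding e_def by (rule mk_factors)
    then show "factor_over X f"
    proof
      assume "\<exists>t\<in>set w. f = Opt (lbl t)"
      then obtain t where "t \<in> set w" "f = Opt (lbl t)" by blast
      then show ?thesis using B sw by auto
    next
      assume "\<exists>g\<in>#G. f = Star (Yl g)"
      then obtain g where g: "g \<in># G" "f = Star (Yl g)" by blast
      then have "set g \<subseteq> \<Delta>" using G(2) sw by auto
      then show ?thesis using B g by (auto simp: Yl_def)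
    qed
  qed
  have uin: "walk_input w \<in> ideal_lang e"
    using mk_contains[of None "[]" w G] by (simp add: flushable_def pend_def e_def)
  have len1: "length e \<le> 2 * length (filter (\<lambda>t. \<not> good G t) w) + 1"
    using mk_length[OF G(3) clG qf(2), of None] by (simp add: e_def)
  have goodF: "\<forall>t. t \<in># (\<Sum>c\<in>#F. mset c) \<longrightarrow> good G t"
    using G(1) by (metis good_def in_sum_mset_iff)
  have "length (filter (\<lambda>t. \<not> good G t) w) = size (filter_mset (\<lambda>t. \<not> good G t) (mset w))"
    by (metis mset_filter size_mset)
  also have "filter_mset (\<lambda>t. \<not> good G t) (mset w) =
      filter_mset (\<lambda>t. \<not> good G t) (mset \<pi>) + filter_mset (\<lambda>t. \<not> good G t) (\<Sum>c\<in>#L. mset c)"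
  proof -
    have "filter_mset (\<lambda>t. \<not> good G t) (\<Sum>c\<in>#F. mset c) = {#}"
      using goodF by (auto simp: filter_empty_mset)
    then show ?thesis using dc(3) FL(1) by simp
  qed
  also have "size \<dots> \<le> length \<pi> + (\<Sum>c\<in>#L. length c)"
  proof -
    have a: "size (filter_mset (\<lambda>t. \<not> good G t) (mset \<pi>)) \<le> length \<pi>"
      by (metis size_filter_mset_lesseq size_mset)
    have "size (filter_mset (\<lambda>t. \<not> good G t) (\<Sum>c\<in>#L. mset c)) \<le> size (\<Sum>c\<in>#L. mset c)"
      by (rule size_filter_mset_lesseq)
    then have b: "size (filter_mset (\<lambda>t. \<not> good G t) (\<Sum>c\<in>#L. mset c)) \<le> (\<Sum>c\<in>#L. length c)"
      by (simp only: size_sum_mset)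
    show ?thesis using add_mono[OF a b] by simp
  qed
  also have "(\<Sum>c\<in>#L. length c) \<le> n * size L"
    using dc(4) FL(1) by (intro sum_len_bound) auto
  finally have nb: "length (filter (\<lambda>t. \<not> good G t) w) \<le> length \<pi> + n * size L" by simp
  have sL: "\<forall>c. \<bar>(\<Sum>c'\<in>#L. evm k (mset c')) c\<bar> \<le> int n"
  proof
    fix c
    have "evm k (mset w) = evm k (mset \<pi>) + (\<Sum>c\<in>#F. evm k (mset c)) + (\<Sum>c\<in>#L. evm k (mset c))"
      using dc(3) FL(1) by (simp add: evm_plus evm_sum add.assoc)
    then have "(\<Sum>c'\<in>#L. evm k (mset c')) = - evm k (mset \<pi>)" using ev0 FL(2)
      by (simp add: add_eq_0_iff)
    moreover have "\<bar>evm k (mset \<pi>) c\<bar> \<le> int n"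
      using evm_bound[OF updD, of "mset \<pi>" c] path_set[OF dc(1)] dc(2) by simp
    ultimately show "\<bar>(\<Sum>c'\<in>#L. evm k (mset c')) c\<bar> \<le> int n" by simp
  qed
  have "Suc (size L) \<le> (2 * k * n + 1) ^ k"
  proof (rule L_bound[OF updD _ FL(3) sL])
    show "\<forall>c\<in>#L. set c \<subseteq> \<Delta> \<and> length c \<le> n" using dc(4) FL(1) sw by auto
  qed
  then have "length e \<le> 2 * (length \<pi> + n * size L) + 1" using len1 nb by (meson add_le_mono1 mult_le_mono2 order_trans)
  also have "\<dots> \<le> 2 * n * (2 * k * n + 1) ^ k"
  proof -
    have "length \<pi> + n * size L + 1 \<le> n * Suc (size L)" using dc(2) by simp
    also have "\<dots> \<le> n * (2 * k * n + 1) ^ k" using mult_le_mono2[OF \<open>Suc (size L) \<le> _\<close>, of n] by simp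
    finally show ?thesis by simp
  qed
  finally have len: "length e \<le> 2 * n * (2 * k * n + 1) ^ k" .
  have sub: "ideal_lang e \<subseteq> down_closure (bca_lang k q0 \<Delta> Qf)"
  proof
    fix v assume "v \<in> ideal_lang e"
    then have "v \<in> pend None (ideal_lang (mk G None w))" by (simp add: pend_def e_def)
    from mk_sub[OF clG qf(2) _ this] obtain ws' N where
      ws': "path \<Delta> q0 ws' qf" "mset ws' = mset w + sumG N" "set_mset N \<subseteq> set_mset G"
           "subseq v (walk_input ws')" by auto
    define M where "M = size N"
    have NM: "N \<subseteq># repeat_mset M G"
    proof (rule mset_subset_eqI)
      fix g
      show "count N g \<le> count (repeat_mset M G) g"
      proof (cases "g \<in># N")
        case True
        then have "count G g \<ge> 1" using ws'(3) by auto
        moreover have "count N g \<le> M" by (simp add: M_def count_le_size)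
        ultimately show ?thesis by (simp add: mult_le_mono2[of 1, simplified] order_trans)
      next
        case False then show ?thesis by (simp add: not_in_iff)
      qed
    qed
    define K where "K = repeat_mset M G - N"
    have NK: "N + K = repeat_mset M G" using NM by (simp add: K_def)
    have "set w \<subseteq> set ws'" using ws'(2) by (metis set_mset_mset set_mset_union Un_upper1)
    moreover have "set_mset K \<subseteq> set_mset G"
    proof
      fix x assume "x \<in># K"
      then have "x \<in># repeat_mset M G" unfolding K_def by (rule in_diffD)
      then have "count (repeat_mset M G) x > 0" by (simp only: count_greater_zero_iff)
      then have "M * count G x > 0" by simp
      then show "x \<in># G" by (simp del: count_greater_zero_iff add: count_greater_zero_iff[symmetric])
    qed
    ultimately obtain ws'' where ws'': "path \<Delta> q0 ws'' qf" "mset ws'' = mset ws' + sumG K" "subseq ws' ws''"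
      using insert_many[OF G(2) ws'(1)] by blast
    have sumGadd: "sumG (A + B) = sumG A + sumG B" for A B by (simp add: sumG_def)
    have sumGrep: "sumG (repeat_mset j A) = repeat_mset j (sumG A)" for j A
      by (induction j) (auto simp: sumGadd sumG_def)
    have "mset ws'' = mset w + repeat_mset M (sumG G)"
      using ws'(2) ws''(2) NK by (simp add: sumGadd[symmetric] sumGrep add.assoc)
    then have "evm k (mset ws'') = 0" using ev0 evG by (simp add: evm_plus evm_repeat)
    then have "accepting k q0 \<Delta> Qf ws''" using ws''(1) qf(1) by (auto simp: accepting_iff)
    moreover have "subseq v (walk_input ws'')"
      using ws'(4) subseq_walk_input[OF ws''(3)] by (rule subseq_order.order_trans)
    ultimately show "v \<in> down_closure (bca_lang k q0 \<Delta> Qf)"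
      by (auto simp: down_closure_def bca_lang_def)
  qed
  show ?thesis using ie len uin sub by blast
qed


lemma subseq_split: "subseq u (a @ b) \<Longrightarrow> \<exists>u1 u2. u = u1 @ u2 \<and> subseq u1 a \<and> subseq u2 b"
proof (induction a arbitrary: u)
  case Nil then show ?case by (intro exI[of _ "[]"] exI[of _ u]) auto
next
  case (Cons x a)
  show ?case
  proof (cases u)
    case Nil then show ?thesis by (intro exI[of _ "[]"] exI[of _ "[]"]) auto
  next
    case (Cons y u')
    show ?thesis
    proof (cases "y = x")
      case True
      then have "subseq u' (a @ b)" using Cons.prems Cons by simp
      from Cons.IH[OF this] obtain u1 u2 where "u' = u1 @ u2" "subseq u1 a" "subseq u2 b" by blast
      then show ?thesis using Cons True by (intro exI[of _ "y # u1"] exI[of _ u2]) auto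
    next
      case False
      then have "subseq u (a @ b)" using Cons.prems Cons by simp
      from Cons.IH[OF this] obtain u1 u2 where "u = u1 @ u2" "subseq u1 a" "subseq u2 b" by blast
      then show ?thesis by (intro exI[of _ u1] exI[of _ u2]) auto
    qed
  qed
qed

lemma factor_down: "subseq u v \<Longrightarrow> v \<in> factor_lang f \<Longrightarrow> u \<in> factor_lang f"
proof (cases f)
  case (Star Y)
  assume "subseq u v" "v \<in> factor_lang f"
  then show ?thesis using Star by (auto dest: list_emb_set)
next
  case (Opt a)
  assume a: "subseq u v" "v \<in> factor_lang f"
  show ?thesis
  proof (cases a)
    case None then show ?thesis using a Opt by auto
  next
    case (Some x)
    then have "v = [x] \<or> v = []" using a Opt by auto
    then have "u = [x] \<or> u = []" using a(1)
      by (cases u) (auto simp: subseq_Cons2_iff split: if_splits)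
    then show ?thesis using Opt Some by auto
  qed
qed

lemma ideal_down: "subseq u v \<Longrightarrow> v \<in> ideal_lang e \<Longrightarrow> u \<in> ideal_lang e"
proof (induction e arbitrary: u v)
  case Nil then show ?case by auto
next
  case (Cons f fs)
  from Cons.prems(2) obtain a b where ab: "v = a @ b" "a \<in> factor_lang f" "b \<in> ideal_lang fs"
    by (auto dest: concE)
  from subseq_split[of u a b] Cons.prems(1) ab(1) obtain u1 u2 where
    u: "u = u1 @ u2" "subseq u1 a" "subseq u2 b" by blast
  have "u1 \<in> factor_lang f" using factor_down[OF u(2) ab(2)] .
  moreover have "u2 \<in> ideal_lang fs" using Cons.IH[OF u(3) ab(3)] .
  ultimately show ?case using u(1) by (simp add: concI)
qed

theorem mainTheorem9:
  fixes k n :: nat and Q :: "'q set" and X :: "'x set" and q0 :: 'q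
    and \<Delta> :: "('q, 'x) trans set" and Qf :: "'q set"
  assumes "blind_counter_automaton k Q X q0 \<Delta> Qf"
    and "card Q = n" and "n \<ge> 1"
  shows "(\<forall>u \<in> bca_lang k q0 \<Delta> Qf. \<exists>e. ideal_expr X e \<and> length e \<le> (5 * n) ^ (7 * (k + 1)^2) \<and>
            u \<in> ideal_lang e \<and> ideal_lang e \<subseteq> down_closure (bca_lang k q0 \<Delta> Qf))
       \<and> (\<exists>E. finite E \<and> (\<forall>e\<in>E. ideal_expr X e \<and> length e \<le> (5 * n) ^ (7 * (k + 1)^2)) \<and>
            down_closure (bca_lang k q0 \<Delta> Qf) = (\<Union>e\<in>E. ideal_lang e))"
proof -
  let ?B = "(5 * n) ^ (7 * (k + 1)^2)"
  let ?L = "bca_lang k q0 \<Delta> Qf"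
  have P1: "\<forall>u \<in> ?L. \<exists>e. ideal_expr X e \<and> length e \<le> ?B \<and> u \<in> ideal_lang e \<and> ideal_lang e \<subseteq> down_closure ?L"
  proof
    fix u assume "u \<in> ?L"
    then obtain w where w: "u = walk_input w" "accepting k q0 \<Delta> Qf w" by (auto simp: bca_lang_def)
    from main_word[OF assms w(2)] obtain e where
      e: "ideal_expr X e" "length e \<le> 2 * n * (2 * k * n + 1) ^ k" "walk_input w \<in> ideal_lang e"
         "ideal_lang e \<subseteq> down_closure ?L" by blast
    have "length e \<le> ?B" using e(2) arith_bound[OF assms(3), of k] by linarith
    then show "\<exists>e. ideal_expr X e \<and> length e \<le> ?B \<and> u \<in> ideal_lang e \<and> ideal_lang e \<subseteq> down_closure ?L"
      using e w(1) by blast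
  qed
  define FX where "FX = Star ` Pow X \<union> Opt ` insert None (Some ` X)"
  have fX: "finite X" using assms(1) by (simp add: blind_counter_automaton_def)
  have fFX: "finite FX" using fX by (simp add: FX_def)
  have ieFX: "ideal_expr X e \<Longrightarrow> set e \<subseteq> FX" for e
  proof
    fix f assume "ideal_expr X e" "f \<in> set e"
    then have "factor_over X f" by (simp add: ideal_expr_def)
    then show "f \<in> FX"
    proof (cases f)
      case (Opt a) then show ?thesis using \<open>factor_over X f\<close> by (cases a) (auto simp: FX_def)
    qed (auto simp: FX_def)
  qed
  define E where "E = {e. ideal_expr X e \<and> length e \<le> ?B \<and> ideal_lang e \<subseteq> down_closure ?L}"
  have "finite E"
  proof (rule finite_subset)
    show "E \<subseteq> {e. set e \<subseteq> FX \<and> length e \<le> ?B}" using ieFX by (auto simp: E_def)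
    show "finite {e. set e \<subseteq> FX \<and> length e \<le> ?B}" using fFX by (rule finite_lists_length_le)
  qed
  moreover have "\<forall>e\<in>E. ideal_expr X e \<and> length e \<le> ?B" by (auto simp: E_def)
  moreover have "down_closure ?L = (\<Union>e\<in>E. ideal_lang e)"
  proof
    show "(\<Union>e\<in>E. ideal_lang e) \<subseteq> down_closure ?L" by (auto simp: E_def)
    show "down_closure ?L \<subseteq> (\<Union>e\<in>E. ideal_lang e)"
    proof
      fix u assume "u \<in> down_closure ?L"
      then obtain v where v: "v \<in> ?L" "subseq u v" by (auto simp: down_closure_def)
      from P1 v(1) obtain e where e: "ideal_expr X e" "length e \<le> ?B" "v \<in> ideal_lang e"
        "ideal_lang e \<subseteq> down_closure ?L" by blast
      then have "e \<in> E" by (simp add: E_def)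
      moreover have "u \<in> ideal_lang e" using ideal_down[OF v(2) e(3)] .
      ultimately show "u \<in> (\<Union>e\<in>E. ideal_lang e)" by blast
    qed
  qed
  ultimately show ?thesis using P1 by blast
qed


end
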